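(* Let $\nu$ be a charge on $\mathbb{C}$ satisfying the Blaschke condition near infinity in the upper half-plane, i.e. $$\int_{\mathbb{C}^{\mathrm{up}}\setminus D(r_0)} \operatorname{Im}\frac{1}{\bar z}\, d|\nu|(z)<+\infty\quad\text{for some } r_0>0,$$ and let $\nu^{\overline{\mathrm{up}}}:=\nu|_{\{\operatorname{Im} z\ge 0\}}$ be the restriction of $\nu$ to the closed upper half-plane. Then the balayage $\nu^{\mathrm{bal}}$ of $\nu$ from $\mathbb{C}^{\mathrm{up}}$ is well defined (the defining integral converges absolutely for every bounded Borel set, so $\nu^{\mathrm{bal}}$ is a charge on $\mathbb{C}$), and for all real numbers $-\infty<t_1<t_2<+\infty$ with $t_1t_2\ge 0$, with $x_0:=\frac{t_1+t_2}{2}$, $r:=\frac{t_2-t_1}{2}$, and every $a\in(0,1)$, \begin{multline*} 0\le |\nu^{\mathrm{bal}}|^{\mathbb{R}}(t_2)-|\nu^{\mathrm{bal}}|^{\mathbb{R}}(t_1)\le |\nu^{\overline{\mathrm{up}}}|\bigl(\overline D(x_0,r)\bigr)+\frac{2r}{a|x_0|}\,|\nu^{\overline{\mathrm{up}}}|\Bigl(\overline D\bigl(0,\tfrac{3}{a}|x_0|\bigr)\Bigr)\\ +\frac{r}{(1-a)^2}\int_{|z|\ge |x_0|}\Bigl|\operatorname{Im}\frac1z\Bigr|\,d|\nu^{\overline{\mathrm{up}}}|(z)+r\Bigl(\int_r^{a|x_0|}\frac{|\nu^{\overline{\mathrm{up}}}|(\overline D(x_0,t))}{t^2}\,dt\Bigr)^+,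 \end{multline*} where $x^+=\max\{x,0\}$ and $\int_r^{s}=-\int_s^r$ if $s<r$.
   Context: A charge on a Borel set $S\subset\mathbb{C}$ is a countably additive function on Borel subsets of $S$ with values in $[-\infty,+\infty]$ that is finite on compact subsets; $|\nu|$ denotes its total variation. $D(z,r)$ is the open disc and $\overline D(z,r)$ the closed disc of centre $z$ and radius $r$, $D(r)=D(0,r)$. $\mathbb{C}^{\mathrm{up}}=\{\operatorname{Im}z>0\}$, $\mathbb{C}_{\overline{\mathrm{lw}}}=\{\operatorname{Im}z\le 0\}$. For $z\in\mathbb{C}^{\mathrm{up}}$ and Borel $B\subset\mathbb{C}$ the harmonic measure is $\omega(z,B)=\frac1\pi\int_{B\cap\mathbb{R}}\frac{\operatorname{Im}z}{(t-\operatorname{Re}z)^2+(\operatorname{Im}z)^2}\,dt$. The balayage of $\nu$ from $\mathbb{C}^{\mathrm{up}}$ is the set function $\nu^{\mathrm{bal}}(B):=\int_{\mathbb{C}^{\mathrm{up}}}\omega(z,B)\,d\nu(z)+\nu(B\cap\mathbb{C}_{\overline{\mathrm{lw}}})$ on Borel sets $B$. For a charge $\mu$ on $\mathbb{C}$, its distribution function on $\mathbb{R}$ is $\mu^{\mathbb{R}}(x)=\mu([0,x])$ for $x\ge0$ and $\mu^{\mathbb{R}}(x)=-\mu([x,0))$ for $x<0$. *)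

theory Defs
  imports "HOL-Analysis.Analysis"
begin

text \<open>A charge on the complex plane is represented through its Jordan decomposition:
  a pair of mutually singular Borel measures, both finite on compact sets.
  The charge is nu = nu_p - nu_n and its total variation is nu_p + nu_n.\<close>

definition charge_pair :: "complex measure \<Rightarrow> complex measure \<Rightarrow> bool" where
  "charge_pair np nn \<longleftrightarrow>
     sets np = sets borel \<and> sets nn = sets borel \<and>
     (\<forall>K. compact K \<longrightarrow> emeasure np K < \<infinity> \<and> emeasure nn K < \<infinity>) \<and>
     (\<exists>P \<in> sets borel. emeasure nn P = 0 \<and> emeasure np (UNIV - P) = 0)"

definition upper_open :: "complex set" where
  "upper_open = {z. Im z > 0}"

definition upper_closed :: "complex set" where
  "upper_closed = {z. Im z \<ge> 0}"

definition lower_closed :: "complex set" where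
  "lower_closed = {z. Im z \<le> 0}"

text \<open>Harmonic measure of the upper half-plane at z (Im z > 0) of a Borel set B.\<close>
definition harm :: "complex \<Rightarrow> complex set \<Rightarrow> real" where
  "harm z B = (1 / pi) *
     (LINT t : {t. complex_of_real t \<in> B} | lborel.
        Im z / ((t - Re z)\<^sup>2 + (Im z)\<^sup>2))"

definition tv_nu :: "complex measure \<Rightarrow> complex measure \<Rightarrow> complex set \<Rightarrow> ennreal" where
  "tv_nu np nn B = emeasure np B + emeasure nn B"

definition tv_up :: "complex measure \<Rightarrow> complex measure \<Rightarrow> complex set \<Rightarrow> ennreal" where
  "tv_up np nn B = tv_nu np nn (B \<inter> upper_closed)"

definition bal :: "complex measure \<Rightarrow> complex measure \<Rightarrow> complex set \<Rightarrow> real" where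
  "bal np nn B =
     (\<integral>z. indicator upper_open z * harm z B \<partial>np)
     - (\<integral>z. indicator upper_open z * harm z B \<partial>nn)
     + measure np (B \<inter> lower_closed) - measure nn (B \<inter> lower_closed)"

definition tv_setfun :: "(complex set \<Rightarrow> real) \<Rightarrow> complex set \<Rightarrow> ereal" where
  "tv_setfun f B =
     (SUP IP \<in> {(I, P). finite (I :: nat set) \<and> disjoint_family_on P I \<and>
                        (\<forall>i\<in>I. P i \<in> sets borel) \<and> (\<Union>i\<in>I. P i) = B}.
        ereal (\<Sum>i\<in>fst IP. \<bar>f (snd IP i)\<bar>))"

definition distR :: "(complex set \<Rightarrow> real) \<Rightarrow> real \<Rightarrow> real" where
  "distR mu x =
     (if x \<ge> 0 then mu (complex_of_real ` {0..x})
      else - mu (complex_of_real ` {x..<0}))"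

end

theory Submission
  imports Defs
begin
lemma theta_bounds:
  fixes x y x0 r :: real
  assumes y: "y > 0" and r: "r > 0"
  defines "\<theta> \<equiv> arctan ((x0 + r - x) / y) - arctan ((x0 - r - x) / y)"
  shows "0 \<le> \<theta>" "\<theta> \<le> pi"
    "r\<^sup>2 < (x - x0)\<^sup>2 + y\<^sup>2 \<Longrightarrow> \<theta> \<le> pi / 2 \<and> \<theta> \<le> 2 * r * y / ((x - x0)\<^sup>2 + y\<^sup>2 - r\<^sup>2)"
proof -
  define A where "A = (x0 + r - x) / y"
  define B where "B = (x0 - r - x) / y"
  have AB: "B < A" using y r by (simp add: A_def B_def divide_strict_right_mono)
  have th: "\<theta> = arctan A - arctan B" by (simp add: \<theta>_def A_def B_def)
  show "0 \<le> \<theta>" using AB by (simp add: th arctan_less_iff less_imp_le)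
  show "\<theta> \<le> pi" using arctan_bounded[of A] arctan_bounded[of B] by (simp add: th)
  assume rr: "r\<^sup>2 < (x - x0)\<^sup>2 + y\<^sup>2"
  have ABp: "1 + A * B = ((x - x0)\<^sup>2 + y\<^sup>2 - r\<^sup>2) / y\<^sup>2"
    using y by (simp add: A_def B_def field_simps power2_eq_square)
  have ABpos: "1 + A * B > 0" using rr y by (simp add: ABp)
  have "cos \<theta> = cos (arctan A) * cos (arctan B) + sin (arctan A) * sin (arctan B)"
    by (simp add: th cos_diff)
  also have "\<dots> = (1 + A * B) / (sqrt (1 + A\<^sup>2) * sqrt (1 + B\<^sup>2))"
    by (simp add: cos_arctan sin_arctan add_divide_distrib)
  finally have cpos: "cos \<theta> > 0" using ABpos by (simp add: add_pos_nonneg)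
  have t0: "0 < \<theta>" using AB by (simp add: th arctan_less_iff)
  have tlt: "\<theta> < pi / 2"
  proof (rule ccontr)
    assume "\<not> \<theta> < pi / 2"
    hence "pi / 2 \<le> \<theta>" by simp
    moreover have "\<theta> \<le> pi" using arctan_bounded[of A] arctan_bounded[of B] by (simp add: th)
    ultimately have "cos \<theta> \<le> 0"
    proof (cases "\<theta> = pi/2")
      case True thus ?thesis by (simp only: cos_pi_half order_refl)
    next
      case False thus ?thesis using \<open>pi / 2 \<le> \<theta>\<close> \<open>\<theta> \<le> pi\<close>
        by (intro less_imp_le cos_lt_zero_pi) auto
    qed
    thus False using cpos by simp
  qed
  have "tan \<theta> = (A - B) / (1 + A * B)"
    unfolding th by (subst tan_diff) (use cpos th in \<open>auto simp: cos_arctan_not_zero tan_arctan\<close>)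
  also have "\<dots> = 2 * r * y / ((x - x0)\<^sup>2 + y\<^sup>2 - r\<^sup>2)"
    using y by (simp add: ABp A_def B_def field_simps power2_eq_square)
  finally have tq: "tan \<theta> = 2 * r * y / ((x - x0)\<^sup>2 + y\<^sup>2 - r\<^sup>2)" .
  have "\<theta> = arctan (tan \<theta>)" using t0 tlt by (simp add: arctan_tan)
  also have "\<dots> \<le> tan \<theta>"
  proof (rule arctan_le_self)
    show "0 \<le> tan \<theta>" unfolding tq using y r rr by (intro divide_nonneg_pos) auto
  qed
  finally show "\<theta> \<le> pi / 2 \<and> \<theta> \<le> 2 * r * y / ((x - x0)\<^sup>2 + y\<^sup>2 - r\<^sup>2)"
    using tlt tq by simp
qed

definition Pk :: "complex \<Rightarrow> real \<Rightarrow> real" where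
  "Pk z t = Im z / ((t - Re z)\<^sup>2 + (Im z)\<^sup>2)"
definition rset :: "complex set \<Rightarrow> real set" where
  "rset B = {t. complex_of_real t \<in> B}"
definition hn :: "complex \<Rightarrow> complex set \<Rightarrow> ennreal" where
  "hn z B = (\<integral>\<^sup>+ t. ennreal (indicator (rset B) t * Pk z t) \<partial>lborel)"

lemma arc_int:
  fixes x y c d :: real
  assumes y: "y > 0" and cd: "c \<le> d"
  shows "(\<integral>\<^sup>+ t. ennreal (indicator {c..d} t * (y / ((t - x)\<^sup>2 + y\<^sup>2))) \<partial>lborel)
     = ennreal (arctan ((d - x) / y) - arctan ((c - x) / y))"
proof -
  have der: "((\<lambda>t. arctan ((t - x) / y)) has_real_derivative (y / ((t - x)\<^sup>2 + y\<^sup>2))) (at t)" for t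
  proof -
    have "((\<lambda>t. arctan ((t - x) / y)) has_real_derivative (inverse (1 + ((t - x) / y)\<^sup>2) * (1 / y))) (at t)"
      using y by (auto intro!: derivative_eq_intros)
    moreover have "inverse (1 + ((t - x) / y)\<^sup>2) * (1 / y) = y / ((t - x)\<^sup>2 + y\<^sup>2)"
      using y by (simp add: field_simps power2_eq_square)
    ultimately show ?thesis by simp
  qed
  have "((\<lambda>t. y / ((t - x)\<^sup>2 + y\<^sup>2)) has_integral (arctan ((d - x) / y) - arctan ((c - x) / y))) {c..d}"
    using cd by (intro fundamental_theorem_of_calculus)
      (auto intro: has_field_derivative_at_within[OF der] simp: has_real_derivative_iff_has_vector_derivative[symmetric])
  from nn_integral_has_integral_lebesgue[OF _ this] y show ?thesis
    by (simp add: add_pos_nonneg)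
qed

lemma Pk_nonneg: "Im z \<ge> 0 \<Longrightarrow> Pk z t \<ge> 0"
  by (simp add: Pk_def)

lemma rset_borel: "B \<in> sets borel \<Longrightarrow> rset B \<in> sets borel"
proof -
  assume B: "B \<in> sets borel"
  have m: "(\<lambda>t::real. complex_of_real t) \<in> borel \<rightarrow>\<^sub>M borel"
    by (intro borel_measurable_continuous_onI continuous_intros)
  have "rset B = (\<lambda>t::real. complex_of_real t) -` B \<inter> space borel"
    by (auto simp: rset_def)
  thus ?thesis using measurable_sets[OF m B] by simp
qed

lemma rset_bounded: "bounded B \<Longrightarrow> \<exists>R>0. rset B \<subseteq> {-R..R}"
proof -
  assume "bounded B"
  then obtain R where R: "R > 0" "\<And>z. z \<in> B \<Longrightarrow> cmod z \<le> R"
    by (meson bounded_pos)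
  have "rset B \<subseteq> {-R..R}"
    using R(2) by (auto simp: rset_def abs_le_iff dest!: R(2))
  thus ?thesis using R(1) by blast
qed

lemma rset_image [simp]: "rset (complex_of_real ` S) = S"
  by (auto simp: rset_def)

lemma rset_UN: "rset (\<Union>n. A n) = (\<Union>n. rset (A n))"
  by (auto simp: rset_def)

lemma hn_mono: "Im z \<ge> 0 \<Longrightarrow> rset B \<subseteq> rset C \<Longrightarrow> hn z B \<le> hn z C"
  unfolding hn_def
  by (intro nn_integral_mono ennreal_leI mult_right_mono)
     (auto simp: indicator_def Pk_nonneg)

lemma hn_interval:
  assumes "Im z > 0" "c \<le> d"
  shows "hn z (complex_of_real ` {c..d}) = ennreal (arctan ((d - Re z) / Im z) - arctan ((c - Re z) / Im z))"
  unfolding hn_def rset_image Pk_def by (rule arc_int) (use assms in auto)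

lemma Pk_meas [measurable]: "(\<lambda>(z, t). Pk z t) \<in> borel_measurable (borel \<Otimes>\<^sub>M lborel)"
  unfolding Pk_def by measurable

lemma hn_meas: "B \<in> sets borel \<Longrightarrow> (\<lambda>z. hn z B) \<in> borel_measurable borel"
proof -
  assume B: "B \<in> sets borel"
  have [measurable]: "rset B \<in> sets lborel" using rset_borel[OF B] by simp
  have "(\<lambda>(z, t). ennreal (indicator (rset B) t * Pk z t)) \<in> borel_measurable (borel \<Otimes>\<^sub>M lborel)"
    by measurable
  then show ?thesis unfolding hn_def
    using lborel.borel_measurable_nn_integral[of "\<lambda>z t. ennreal (indicator (rset B) t * Pk z t)" borel]
    by simp
qed

lemma hn_finite:
  assumes z: "Im z > 0" and B: "bounded B"
  shows "hn z B < \<infinity>"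
proof -
  obtain R where R: "R > 0" "rset B \<subseteq> {-R..R}" using rset_bounded[OF B] by blast
  have "hn z B \<le> hn z (complex_of_real ` {-R..R})"
    using z R by (intro hn_mono) auto
  also have "\<dots> < \<infinity>" using z R by (simp add: hn_interval)
  finally show ?thesis .
qed

lemma harm_hn:
  assumes z: "Im z > 0" and B: "B \<in> sets borel" "bounded B"
  shows "hn z B = ennreal (pi * harm z B)" "harm z B \<ge> 0"
proof -
  have [measurable]: "rset B \<in> sets lborel" using rset_borel[OF B(1)] by simp
  have meas: "(\<lambda>t. indicator (rset B) t * Pk z t) \<in> borel_measurable lborel"
  proof -
    have "(\<lambda>t. Pk z t) \<in> borel_measurable lborel" unfolding Pk_def by measurable
    thus ?thesis by measurable
  qed
  have int: "integrable lborel (\<lambda>t. indicator (rset B) t * Pk z t)"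
    using hn_finite[OF z B(2)] z meas
    by (intro integrableI_nonneg) (auto simp: hn_def Pk_nonneg)
  have eq: "hn z B = ennreal (\<integral>t. indicator (rset B) t * Pk z t \<partial>lborel)"
    unfolding hn_def using z by (intro nn_integral_eq_integral int) (auto simp: Pk_nonneg)
  have h: "harm z B = (1 / pi) * (\<integral>t. indicator (rset B) t * Pk z t \<partial>lborel)"
    by (simp add: harm_def set_lebesgue_integral_def rset_def Pk_def)
  have nn: "(\<integral>t. indicator (rset B) t * Pk z t \<partial>lborel) \<ge> 0"
    using z by (intro integral_nonneg_AE) (auto simp: Pk_nonneg)
  show "hn z B = ennreal (pi * harm z B)" using eq h by simp
  show "harm z B \<ge> 0" using nn h by simp
qed

lemma hn_suminf:
  assumes z: "Im z \<ge> 0" and A: "range A \<subseteq> sets borel" "disjoint_family A"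
  shows "hn z (\<Union>n. A n) = (\<Sum>n. hn z (A n))"
proof -
  have [measurable]: "rset (A n) \<in> sets lborel" for n using rset_borel A(1) by auto
  have dj: "disjoint_family (\<lambda>n. rset (A n))" using A(2)
    by (auto simp: disjoint_family_on_def rset_def)
  have Pm: "(\<lambda>t. Pk z t) \<in> borel_measurable lborel" unfolding Pk_def by measurable
  have "hn z (\<Union>n. A n) = (\<integral>\<^sup>+ t. (\<Sum>n. ennreal (indicator (rset (A n)) t * Pk z t)) \<partial>lborel)"
    unfolding hn_def rset_UN
  proof (intro nn_integral_cong)
    fix t
    have "ennreal (indicator (\<Union>n. rset (A n)) t * Pk z t) = indicator (\<Union>n. rset (A n)) t * ennreal (Pk z t)"
      by (simp add: indicator_def)
    also have "\<dots> = (\<Sum>n. indicator (rset (A n)) t) * ennreal (Pk z t)"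
      by (simp add: suminf_indicator[OF dj])
    also have "\<dots> = (\<Sum>n. indicator (rset (A n)) t * ennreal (Pk z t))"
      by (rule ennreal_suminf_multc[symmetric])
    also have "\<dots> = (\<Sum>n. ennreal (indicator (rset (A n)) t * Pk z t))"
      by (rule arg_cong[where f=suminf]) (auto simp: fun_eq_iff indicator_def)
    finally show "ennreal (indicator (\<Union>n. rset (A n)) t * Pk z t) = (\<Sum>n. ennreal (indicator (rset (A n)) t * Pk z t))" .
  qed
  also have "\<dots> = (\<Sum>n. hn z (A n))"
    unfolding hn_def using Pm by (intro nn_integral_suminf) measurable
  finally show ?thesis .
qed

definition th :: "complex \<Rightarrow> real \<Rightarrow> real \<Rightarrow> real" where
  "th z x0 r = arctan ((x0 + r - Re z) / Im z) - arctan ((x0 - r - Re z) / Im z)"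

lemma cmod_sq: "(cmod (z - complex_of_real x0))\<^sup>2 = (Re z - x0)\<^sup>2 + (Im z)\<^sup>2"
  by (simp add: cmod_power2)

lemma th_basic:
  assumes "Im z > 0" "r > 0"
  shows "0 \<le> th z x0 r" "th z x0 r \<le> pi"
  using theta_bounds[OF assms, of x0 "Re z"] by (auto simp: th_def)

lemma th_out:
  assumes "Im z > 0" "r > 0" "cmod (z - complex_of_real x0) > r"
  shows "th z x0 r \<le> pi / 2" "th z x0 r \<le> 2 * r * Im z / ((cmod (z - complex_of_real x0))\<^sup>2 - r\<^sup>2)"
proof -
  have "r\<^sup>2 < (cmod (z - complex_of_real x0))\<^sup>2" using assms
    by (simp add: power_strict_mono)
  hence "r\<^sup>2 < (Re z - x0)\<^sup>2 + (Im z)\<^sup>2" by (simp add: cmod_sq)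
  hence "r\<^sup>2 < (Re z - x0)\<^sup>2 + (Im z)\<^sup>2" .
  from theta_bounds(3)[OF assms(1,2), of "Re z" x0] this
  show "th z x0 r \<le> pi / 2" "th z x0 r \<le> 2 * r * Im z / ((cmod (z - complex_of_real x0))\<^sup>2 - r\<^sup>2)"
    by (auto simp: th_def cmod_sq)
qed

lemma th_ratio:
  assumes y: "Im z > 0" and r: "r > 0" and out: "cmod (z - complex_of_real x0) > r"
  shows "th z x0 r \<le> pi * r / cmod (z - complex_of_real x0)"
proof -
  define \<rho> where "\<rho> = cmod (z - complex_of_real x0)"
  have rho: "\<rho> > r" using out by (simp add: \<rho>_def)
  have yr: "Im z \<le> \<rho>" unfolding \<rho>_def
    by (metis abs_Im_le_cmod abs_le_iff minus_complex.simps(2) of_real_def complex_of_real_def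
        complex.sel(2) diff_zero)
  show ?thesis
  proof (cases "\<rho> \<le> 2 * r")
    case True
    have "pi / 2 \<le> pi * r / \<rho>" using True rho r pi_gt_zero
      by (simp add: field_simps)
    thus ?thesis using th_out(1)[OF y r out] unfolding \<rho>_def by linarith
  next
    case False
    have "(2 * r)\<^sup>2 \<le> \<rho>\<^sup>2" using False r by (intro power_mono) auto
    hence d: "\<rho>\<^sup>2 - r\<^sup>2 \<ge> 3/4 * \<rho>\<^sup>2" by (simp add: power2_eq_square)
    have "2 * r * Im z / (\<rho>\<^sup>2 - r\<^sup>2) \<le> 2 * r * \<rho> / (3/4 * \<rho>\<^sup>2)"
      using d yr r y rho by (intro frac_le) (auto simp: power2_eq_square)
    also have "\<dots> = (8/3) * r / \<rho>" using rho r by (simp add: power2_eq_square field_simps)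
    also have "\<dots> \<le> pi * r / \<rho>" using pi_gt3 rho r
      by (intro divide_right_mono mult_right_mono) auto
    finally show ?thesis using th_out(2)[OF y r out] by (simp add: \<rho>_def)
  qed
qed

lemma UO_borel [measurable]: "upper_open \<in> sets borel"
proof -
  have "open {z::complex. 0 < Im z}" by (intro open_Collect_less continuous_intros)
  thus ?thesis by (simp add: upper_open_def)
qed
lemma UC_borel [measurable]: "upper_closed \<in> sets borel"
proof -
  have "closed {z::complex. 0 \<le> Im z}" by (intro closed_Collect_le continuous_intros)
  thus ?thesis by (simp add: upper_closed_def)
qed
lemma LC_borel [measurable]: "lower_closed \<in> sets borel"
proof -
  have "closed {z::complex. Im z \<le> 0}" by (intro closed_Collect_le continuous_intros)
  thus ?thesis by (simp add: lower_closed_def)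
qed

lemma Im_inv_cnj: "Im (1 / cnj z) = Im z / (cmod z)\<^sup>2"
  by (simp add: Im_divide cmod_power2)

lemma Im_inv: "\<bar>Im (1 / z)\<bar> = \<bar>Im z\<bar> / (cmod z)\<^sup>2"
  by (simp add: Im_divide cmod_power2)

definition okm :: "complex measure \<Rightarrow> bool" where
  "okm M \<longleftrightarrow> sets M = sets borel \<and> (\<forall>K. compact K \<longrightarrow> emeasure M K < \<infinity>) \<and>
     (\<exists>r0>0. (\<integral>\<^sup>+ z. indicator (upper_open - ball 0 r0) z * ennreal (Im (1 / cnj z)) \<partial>M) < \<infinity>)"

definition W :: "complex measure \<Rightarrow> complex set \<Rightarrow> ennreal" where
  "W M B = (\<integral>\<^sup>+ z. indicator upper_open z * hn z B \<partial>M)"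

lemma okm_sets: "okm M \<Longrightarrow> sets M = sets borel" by (simp add: okm_def)

lemma okm_meas: "okm M \<Longrightarrow> f \<in> borel_measurable borel \<Longrightarrow> f \<in> borel_measurable M"
  using okm_sets measurable_cong_sets by metis

lemma okm_bdd_fin: "okm M \<Longrightarrow> bounded B \<Longrightarrow> emeasure M B < \<infinity>"
proof -
  assume M: "okm M" and B: "bounded B"
  have "emeasure M B \<le> emeasure M (closure B)"
    using M by (intro emeasure_mono closure_subset) (auto simp: okm_def)
  also have "\<dots> < \<infinity>" using M B by (auto simp: okm_def compact_closure)
  finally show ?thesis .
qed

lemma W_meas:
  assumes "okm M" "B \<in> sets borel"
  shows "(\<lambda>z. indicator upper_open z * hn z B) \<in> borel_measurable M"
  using hn_meas[OF assms(2)] by (intro okm_meas[OF assms(1)]) measurable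

lemma th_far0:
  assumes y: "Im z > 0" and R: "R > 0" and far: "cmod z > 2 * R"
  shows "th z 0 R \<le> 3 * R * (Im z / (cmod z)\<^sup>2)"
proof -
  have out: "cmod (z - complex_of_real 0) > R" using far R by simp
  have "(2 * R)\<^sup>2 \<le> (cmod z)\<^sup>2" using far R by (intro power_mono) auto
  hence d: "(cmod z)\<^sup>2 - R\<^sup>2 \<ge> 3/4 * (cmod z)\<^sup>2" by (simp add: power2_eq_square)
  have zp: "cmod z > 0" using far R by linarith
  have "th z 0 R \<le> 2 * R * Im z / ((cmod z)\<^sup>2 - R\<^sup>2)" using th_out(2)[OF y R out] by simp
  also have "\<dots> \<le> 2 * R * Im z / (3/4 * (cmod z)\<^sup>2)"
  proof (rule divide_left_mono)
    have p0: "0 < (cmod z)\<^sup>2" using zp by simp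
    hence p1: "0 < (cmod z)\<^sup>2 - R\<^sup>2" using d by linarith
    show "0 < ((cmod z)\<^sup>2 - R\<^sup>2) * (3 / 4 * (cmod z)\<^sup>2)" using p0 p1 by simp
  qed (use d y R in auto)
  also have "\<dots> = (8/3) * R * (Im z / (cmod z)\<^sup>2)" by (simp add: field_simps)
  also have "\<dots> \<le> 3 * R * (Im z / (cmod z)\<^sup>2)" using y R zp
    by (intro mult_right_mono) auto
  finally show ?thesis .
qed

lemma hn_sym_interval:
  assumes "Im z > 0" "R > 0"
  shows "hn z (complex_of_real ` {-R..R}) = ennreal (th z 0 R)"
  using hn_interval[OF assms(1), of "-R" R] assms by (simp add: th_def)

lemma W_finite:
  assumes M: "okm M" and B: "bounded B"
  shows "W M B < \<infinity>"
proof -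
  obtain r0 where r0: "r0 > 0" and bl: "(\<integral>\<^sup>+ z. indicator (upper_open - ball 0 r0) z * ennreal (Im (1 / cnj z)) \<partial>M) < \<infinity>"
    using M by (auto simp: okm_def)
  obtain R where R: "R > 0" "rset B \<subseteq> {-R..R}" using rset_bounded[OF B] by blast
  define R1 where "R1 = max (2 * R) r0"
  have pw: "indicator upper_open z * hn z B \<le> ennreal pi * indicator (cball 0 R1) z
      + ennreal (3 * R) * (indicator (upper_open - ball 0 r0) z * ennreal (Im (1 / cnj z)))" for z
  proof (cases "z \<in> upper_open")
    case False thus ?thesis by simp
  next
    case True
    hence y: "Im z > 0" by (simp add: upper_open_def)
    have "hn z B \<le> hn z (complex_of_real ` {-R..R})" using y R by (intro hn_mono) auto
    also have "\<dots> = ennreal (th z 0 R)" using hn_sym_interval[OF y R(1)] .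
    finally have h: "hn z B \<le> ennreal (th z 0 R)" .
    show ?thesis
    proof (cases "cmod z \<le> R1")
      case True
      have "ennreal (th z 0 R) \<le> ennreal pi" using th_basic(2)[OF y R(1), of 0] by (rule ennreal_leI)
      hence "hn z B \<le> ennreal pi" by (rule order_trans[OF h])
      thus ?thesis using True \<open>z \<in> upper_open\<close> by (simp add: add_increasing2)
    next
      case False
      hence far: "cmod z > 2 * R" "cmod z \<ge> r0" by (auto simp: R1_def)
      have "th z 0 R \<le> 3 * R * (Im z / (cmod z)\<^sup>2)" by (rule th_far0[OF y R(1) far(1)])
      hence "ennreal (th z 0 R) \<le> ennreal (3 * R * (Im z / (cmod z)\<^sup>2))" by (rule ennreal_leI)
      also have "\<dots> = ennreal (3 * R) * ennreal (Im z / (cmod z)\<^sup>2)"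
        by (rule ennreal_mult) (use R(1) y in auto)
      also have "\<dots> = ennreal (3 * R) * ennreal (Im (1 / cnj z))"
        by (simp add: Im_inv_cnj)
      finally have "hn z B \<le> ennreal (3 * R) * ennreal (Im (1 / cnj z))" by (rule order_trans[OF h])
      thus ?thesis using True far by (simp add: add_increasing)
    qed
  qed
  have [measurable]: "cball 0 R1 \<in> sets M" "upper_open - ball 0 r0 \<in> sets M" using okm_sets[OF M] by auto
  have im_meas: "(\<lambda>z. ennreal (Im (1 / cnj z))) \<in> borel_measurable M"
    unfolding Im_inv_cnj by (intro okm_meas[OF M]) measurable
  have "W M B \<le> (\<integral>\<^sup>+ z. ennreal pi * indicator (cball 0 R1) z
      + ennreal (3 * R) * (indicator (upper_open - ball 0 r0) z * ennreal (Im (1 / cnj z))) \<partial>M)"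
    unfolding W_def by (intro nn_integral_mono pw)
  also have "\<dots> = ennreal pi * emeasure M (cball 0 R1)
      + ennreal (3 * R) * (\<integral>\<^sup>+ z. indicator (upper_open - ball 0 r0) z * ennreal (Im (1 / cnj z)) \<partial>M)"
    using im_meas by (subst nn_integral_add) (auto simp: nn_integral_cmult nn_integral_cmult_indicator)
  also have "\<dots> < \<infinity>" using bl okm_bdd_fin[OF M, of "cball 0 R1"]
    by (simp add: ennreal_mult_less_top)
  finally show ?thesis .
qed

lemma W_suminf:
  assumes M: "okm M" and A: "range A \<subseteq> sets borel" "disjoint_family A"
  shows "W M (\<Union>n. A n) = (\<Sum>n. W M (A n))"
proof -
  have "W M (\<Union>n. A n) = (\<integral>\<^sup>+ z. (\<Sum>n. indicator upper_open z * hn z (A n)) \<partial>M)"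
    unfolding W_def
  proof (intro nn_integral_cong)
    fix z
    show "indicator upper_open z * hn z (\<Union>n. A n) = (\<Sum>n. indicator upper_open z * hn z (A n))"
    proof (cases "z \<in> upper_open")
      case True
      hence "Im z \<ge> 0" by (simp add: upper_open_def)
      thus ?thesis using True hn_suminf[OF _ A] by simp
    qed simp
  qed
  also have "\<dots> = (\<Sum>n. W M (A n))"
    unfolding W_def using W_meas[OF M] A by (intro nn_integral_suminf) auto
  finally show ?thesis .
qed

definition Vint :: "complex measure \<Rightarrow> complex set \<Rightarrow> real" where
  "Vint M B = (\<integral>z. indicator upper_open z * harm z B \<partial>M)"

lemma Vint_props:
  assumes M: "okm M" and B: "B \<in> sets borel" "bounded B"
  shows "integrable M (\<lambda>z. indicator upper_open z * harm z B)"
    "W M B = ennreal (pi * Vint M B)" "Vint M B \<ge> 0"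
proof -
  have pw: "indicator upper_open z * hn z B = ennreal pi * ennreal (indicator upper_open z * harm z B)" for z
  proof (cases "z \<in> upper_open")
    case True
    hence z: "Im z > 0" by (simp add: upper_open_def)
    show ?thesis using True harm_hn[OF z B] by (simp add: ennreal_mult)
  qed simp
  have pw2: "indicator upper_open z * harm z B = indicator upper_open z * (enn2real (hn z B) / pi)" for z
  proof (cases "z \<in> upper_open")
    case True
    hence z: "Im z > 0" by (simp add: upper_open_def)
    show ?thesis using True harm_hn[OF z B] by simp
  qed simp
  have meas: "(\<lambda>z. indicator upper_open z * harm z B) \<in> borel_measurable M"
    unfolding pw2 using hn_meas[OF B(1)]
    by (intro okm_meas[OF M] borel_measurable_times borel_measurable_indicator UO_borel
        borel_measurable_divide borel_measurable_enn2real measurable_const) auto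
  have nn: "AE z in M. 0 \<le> indicator upper_open z * harm z B"
    using harm_hn(2)[OF _ B] by (auto simp: upper_open_def indicator_def)
  have Weq: "W M B = ennreal pi * (\<integral>\<^sup>+ z. ennreal (indicator upper_open z * harm z B) \<partial>M)"
    unfolding W_def pw using meas by (intro nn_integral_cmult) auto
  have fin: "(\<integral>\<^sup>+ z. ennreal (indicator upper_open z * harm z B) \<partial>M) < \<infinity>"
  proof (rule ccontr)
    assume "\<not> (\<integral>\<^sup>+ z. ennreal (indicator upper_open z * harm z B) \<partial>M) < \<infinity>"
    hence "(\<integral>\<^sup>+ z. ennreal (indicator upper_open z * harm z B) \<partial>M) = \<infinity>"
      by (simp add: top.not_eq_extremum[symmetric])
    hence "W M B = \<infinity>" unfolding Weq using pi_gt_zero by (simp add: ennreal_mult_eq_top_iff)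
    thus False using W_finite[OF M B(2)] by simp
  qed
  show int: "integrable M (\<lambda>z. indicator upper_open z * harm z B)"
    using meas nn fin by (intro integrableI_nonneg)
  have "(\<integral>\<^sup>+ z. ennreal (indicator upper_open z * harm z B) \<partial>M) = ennreal (Vint M B)"
    unfolding Vint_def using int nn by (intro nn_integral_eq_integral)
  moreover show V0: "Vint M B \<ge> 0" unfolding Vint_def using nn by (intro integral_nonneg_AE)
  ultimately show "W M B = ennreal (pi * Vint M B)" using Weq by (simp add: ennreal_mult)
qed

definition cadd :: "(complex set \<Rightarrow> real) \<Rightarrow> bool" where
  "cadd g \<longleftrightarrow> (\<forall>A. range A \<subseteq> sets borel \<longrightarrow> disjoint_family A \<longrightarrow> bounded (\<Union>n. A n) \<longrightarrow>
      (\<lambda>n. g (A n)) sums g (\<Union>n. A n))"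

definition V :: "complex measure \<Rightarrow> complex set \<Rightarrow> real" where
  "V M B = Vint M B + measure M (B \<inter> lower_closed)"

lemma Vint_cadd: assumes M: "okm M" shows "cadd (Vint M)"
  unfolding cadd_def
proof (intro allI impI)
  fix A :: "nat \<Rightarrow> complex set"
  assume A: "range A \<subseteq> sets borel" "disjoint_family A" "bounded (\<Union>n. A n)"
  have Ab: "bounded (A n)" for n using A(3) by (rule bounded_subset) auto
  have Ab2: "A n \<in> sets borel" for n using A(1) by auto
  have U: "(\<Union>n. A n) \<in> sets borel" using A(1) by auto
  have "(\<lambda>n. W M (A n)) sums W M (\<Union>n. A n)"
    unfolding W_suminf[OF M A(1,2)] by (rule summable_sums[OF summableI])
  hence "(\<lambda>n. ennreal (pi * Vint M (A n))) sums ennreal (pi * Vint M (\<Union>n. A n))"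
    using Vint_props(2)[OF M Ab2 Ab] Vint_props(2)[OF M U A(3)] by simp
  hence "(\<lambda>n. pi * Vint M (A n)) sums (pi * Vint M (\<Union>n. A n))"
    using Vint_props(3)[OF M Ab2 Ab] Vint_props(3)[OF M U A(3)] by (subst (asm) sums_ennreal) auto
  from sums_divide[OF this, of pi] show "(\<lambda>n. Vint M (A n)) sums Vint M (\<Union>n. A n)" by simp
qed

lemma meas_cadd: assumes M: "okm M" shows "cadd (\<lambda>B. measure M (B \<inter> lower_closed))"
  unfolding cadd_def
proof (intro allI impI)
  fix A :: "nat \<Rightarrow> complex set"
  assume A: "range A \<subseteq> sets borel" "disjoint_family A" "bounded (\<Union>n. A n)"
  have "(\<lambda>n. measure M (A n \<inter> lower_closed)) sums measure M (\<Union>n. A n \<inter> lower_closed)"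
  proof (rule measure_UNION)
    show "range (\<lambda>n. A n \<inter> lower_closed) \<subseteq> sets M" using A(1) okm_sets[OF M] by auto
    show "disjoint_family (\<lambda>n. A n \<inter> lower_closed)" using A(2) by (auto simp: disjoint_family_on_def)
    have "bounded (\<Union>n. A n \<inter> lower_closed)" using A(3) by (rule bounded_subset) auto
    from okm_bdd_fin[OF M this] show "emeasure M (\<Union>n. A n \<inter> lower_closed) \<noteq> \<infinity>"
      by (rule less_imp_neq)
  qed
  moreover have "(\<Union>n. A n \<inter> lower_closed) = (\<Union>n. A n) \<inter> lower_closed" by auto
  ultimately show "(\<lambda>n. measure M (A n \<inter> lower_closed)) sums measure M ((\<Union>n. A n) \<inter> lower_closed)" by simp
qed

lemma V_cadd: "okm M \<Longrightarrow> cadd (V M)"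
  using Vint_cadd meas_cadd unfolding cadd_def V_def
  by (auto intro!: sums_add)

lemma V_nonneg: "okm M \<Longrightarrow> B \<in> sets borel \<Longrightarrow> bounded B \<Longrightarrow> V M B \<ge> 0"
  unfolding V_def using Vint_props(3) by (simp add: add_nonneg_nonneg)

lemma bal_eq: "bal np nn B = V np B - V nn B"
  unfolding bal_def V_def Vint_def by simp

lemma cadd_diff: "cadd f \<Longrightarrow> cadd g \<Longrightarrow> cadd (\<lambda>B. f B - g B)"
  unfolding cadd_def by (auto intro!: sums_diff)
lemma cadd_plus: "cadd f \<Longrightarrow> cadd g \<Longrightarrow> cadd (\<lambda>B. f B + g B)"
  unfolding cadd_def by (auto intro!: sums_add)

lemma cadd_empty: assumes "cadd g" shows "g {} = 0"
proof -
  have "(\<lambda>n. g {}) sums g {}" using assms unfolding cadd_def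
    by (auto dest!: spec[of _ "\<lambda>n. {}"] simp: disjoint_family_on_def)
  hence "(\<lambda>n. g {}) \<longlonglongrightarrow> 0" by (intro summable_LIMSEQ_zero sums_summable)
  thus ?thesis using LIMSEQ_const_iff by blast
qed

lemma cadd_fin:
  fixes I :: "nat set"
  assumes g: "cadd g" and I: "finite I" "disjoint_family_on P I" "\<forall>i\<in>I. P i \<in> sets borel"
    "bounded (\<Union>i\<in>I. P i)"
  shows "g (\<Union>i\<in>I. P i) = (\<Sum>i\<in>I. g (P i))"
proof -
  define A where "A n = (if n \<in> I then P n else {})" for n
  have U: "(\<Union>n. A n) = (\<Union>i\<in>I. P i)" by (auto simp: A_def split: if_splits)
  have "(\<lambda>n. g (A n)) sums g (\<Union>n. A n)"
    using g I unfolding cadd_def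
    by (intro g[unfolded cadd_def, rule_format]) (auto simp: A_def disjoint_family_on_def U)
  moreover have "(\<lambda>n. g (A n)) sums (\<Sum>n\<in>I. g (A n))"
    using I(1) cadd_empty[OF g] by (intro sums_finite) (auto simp: A_def)
  ultimately have "g (\<Union>n. A n) = (\<Sum>n\<in>I. g (A n))" using sums_unique2 by blast
  thus ?thesis unfolding U by (simp add: A_def)
qed

lemma cadd_two:
  assumes g: "cadd g" and XY: "X \<in> sets borel" "Y \<in> sets borel" "X \<inter> Y = {}" "bounded (X \<union> Y)"
  shows "g (X \<union> Y) = g X + g Y"
proof -
  have "g (\<Union>i\<in>{0::nat,1}. (if i = 0 then X else Y)) = (\<Sum>i\<in>{0::nat,1}. g (if i = 0 then X else Y))"
    using XY by (intro cadd_fin[OF g]) (auto simp: disjoint_family_on_def)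
  thus ?thesis by (simp add: Un_commute)
qed

definition Parts :: "complex set \<Rightarrow> (nat set \<times> (nat \<Rightarrow> complex set)) set" where
  "Parts B = {(I, P). finite (I::nat set) \<and> disjoint_family_on P I \<and>
                        (\<forall>i\<in>I. P i \<in> sets borel) \<and> (\<Union>i\<in>I. P i) = B}"

lemma tv_def2: "tv_setfun f B = (SUP IP\<in>Parts B. ereal (\<Sum>i\<in>fst IP. \<bar>f (snd IP i)\<bar>))"
  by (simp add: tv_setfun_def Parts_def)

lemma tv_upper: "(I, P) \<in> Parts B \<Longrightarrow> ereal (\<Sum>i\<in>I. \<bar>f (P i)\<bar>) \<le> tv_setfun f B"
  unfolding tv_def2 by (rule SUP_upper2) auto

lemma tv_least:
  assumes "\<And>(I::nat set) P. finite I \<Longrightarrow> disjoint_family_on P I \<Longrightarrow> (\<forall>i\<in>I. P i \<in> sets borel) \<Longrightarrow> (\<Union>i\<in>I. P i) = B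
     \<Longrightarrow> ereal (\<Sum>i\<in>I. \<bar>f (P i)\<bar>) \<le> c"
  shows "tv_setfun f B \<le> c"
  unfolding tv_def2
proof (rule SUP_least)
  fix IP assume "IP \<in> Parts B"
  then obtain I P where IP: "IP = (I, P)" "finite I" "disjoint_family_on P I" "\<forall>i\<in>I. P i \<in> sets borel" "(\<Union>i\<in>I. P i) = B"
    by (cases IP) (auto simp: Parts_def)
  show "ereal (\<Sum>i\<in>fst IP. \<bar>f (snd IP i)\<bar>) \<le> c" using assms[OF IP(2-5)] IP(1) by simp
qed

lemma tv_le_U:
  assumes f: "cadd f" and U: "cadd U" and dom: "\<And>P. P \<in> sets borel \<Longrightarrow> bounded P \<Longrightarrow> \<bar>f P\<bar> \<le> U P"
    and B: "bounded B"
  shows "tv_setfun f B \<le> ereal (U B)"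
proof (rule tv_least)
  fix I :: "nat set" and P
  assume I: "finite I" "disjoint_family_on P I" "\<forall>i\<in>I. P i \<in> sets borel" "(\<Union>i\<in>I. P i) = B"
  have Pb: "bounded (P i)" if "i \<in> I" for i using B I(4) that by (auto intro: bounded_subset)
  have "(\<Sum>i\<in>I. \<bar>f (P i)\<bar>) \<le> (\<Sum>i\<in>I. U (P i))"
    using I(3) Pb by (intro sum_mono dom) auto
  also have "\<dots> = U B" using cadd_fin[OF U I(1-3)] B I(4) by simp
  finally show "ereal (\<Sum>i\<in>I. \<bar>f (P i)\<bar>) \<le> ereal (U B)" by simp
qed

lemma tv_nonneg:
  assumes B: "B \<in> sets borel"
  shows "0 \<le> tv_setfun f B"
proof -
  have "({0}, \<lambda>_. B) \<in> Parts B" using B by (auto simp: Parts_def disjoint_family_on_def)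
  from tv_upper[OF this, of f] show ?thesis by (simp add: order_trans[rotated])
qed

lemma tv_mono_union:
  assumes A: "A \<in> sets borel" and J: "J \<in> sets borel" and AJ: "A \<inter> J = {}"
  shows "tv_setfun f A \<le> tv_setfun f (A \<union> J)"
proof (rule tv_least)
  fix I :: "nat set" and P
  assume I: "finite I" "disjoint_family_on P I" "\<forall>i\<in>I. P i \<in> sets borel" "(\<Union>i\<in>I. P i) = A"
  obtain m :: nat where m: "m \<notin> I" using I(1) ex_new_if_finite[OF infinite_UNIV_nat] by blast
  define Q where "Q = P(m := J)"
  have mem: "(insert m I, Q) \<in> Parts (A \<union> J)"
  proof -
    have "disjoint_family_on Q (insert m I)"
      using I(2) AJ I(4) m unfolding disjoint_family_on_def Q_def by auto
    moreover have "(\<Union>i\<in>insert m I. Q i) = A \<union> J"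
      using I(4) m by (auto simp: Q_def)
    ultimately show ?thesis using I J m by (auto simp: Q_def Parts_def)
  qed
  have "(\<Sum>i\<in>I. \<bar>f (P i)\<bar>) \<le> (\<Sum>i\<in>insert m I. \<bar>f (Q i)\<bar>)"
  proof -
    have "(\<Sum>i\<in>insert m I. \<bar>f (Q i)\<bar>) = \<bar>f (Q m)\<bar> + (\<Sum>i\<in>I. \<bar>f (Q i)\<bar>)"
      using I(1) m by simp
    also have "(\<Sum>i\<in>I. \<bar>f (Q i)\<bar>) = (\<Sum>i\<in>I. \<bar>f (P i)\<bar>)"
      using m by (intro sum.cong) (auto simp: Q_def)
    finally show ?thesis by simp
  qed
  hence "ereal (\<Sum>i\<in>I. \<bar>f (P i)\<bar>) \<le> ereal (\<Sum>i\<in>insert m I. \<bar>f (Q i)\<bar>)" by simp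
  also have "\<dots> \<le> tv_setfun f (A \<union> J)" by (rule tv_upper[OF mem])
  finally show "ereal (\<Sum>i\<in>I. \<bar>f (P i)\<bar>) \<le> tv_setfun f (A \<union> J)" .
qed

lemma tv_union_le:
  assumes f: "cadd f" and U: "cadd U" and dom: "\<And>P. P \<in> sets borel \<Longrightarrow> bounded P \<Longrightarrow> \<bar>f P\<bar> \<le> U P"
    and A: "A \<in> sets borel" and J: "J \<in> sets borel" and AJ: "A \<inter> J = {}" and bd: "bounded (A \<union> J)"
  shows "tv_setfun f (A \<union> J) \<le> tv_setfun f A + ereal (U J)"
proof (rule tv_least)
  fix I :: "nat set" and P
  assume I: "finite I" "disjoint_family_on P I" "\<forall>i\<in>I. P i \<in> sets borel" "(\<Union>i\<in>I. P i) = A \<union> J"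
  have Pb: "bounded (P i)" if "i \<in> I" for i using I(4) that by (intro bounded_subset[OF bd]) auto
  have split: "\<bar>f (P i)\<bar> \<le> \<bar>f (P i \<inter> A)\<bar> + U (P i \<inter> J)" if i: "i \<in> I" for i
  proof -
    have e: "P i = (P i \<inter> A) \<union> (P i \<inter> J)" using I(4) i by auto
    have bb: "bounded ((P i \<inter> A) \<union> (P i \<inter> J))" using Pb[OF i] e by simp
    have "f ((P i \<inter> A) \<union> (P i \<inter> J)) = f (P i \<inter> A) + f (P i \<inter> J)"
      using I(3) i A J AJ by (intro cadd_two[OF f _ _ _ bb]) auto
    hence "f (P i) = f (P i \<inter> A) + f (P i \<inter> J)" using e by simp
    moreover have "\<bar>f (P i \<inter> J)\<bar> \<le> U (P i \<inter> J)"
      using I(3) i J Pb[OF i] by (intro dom) (auto intro: bounded_subset)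
    ultimately show ?thesis by linarith
  qed
  have "(\<Sum>i\<in>I. \<bar>f (P i)\<bar>) \<le> (\<Sum>i\<in>I. \<bar>f (P i \<inter> A)\<bar>) + (\<Sum>i\<in>I. U (P i \<inter> J))"
    unfolding sum.distrib[symmetric] using split by (intro sum_mono) auto
  also have "(\<Sum>i\<in>I. U (P i \<inter> J)) = U J"
  proof -
    have "U (\<Union>i\<in>I. P i \<inter> J) = (\<Sum>i\<in>I. U (P i \<inter> J))"
      using I(1-3) J bd I(4)
      by (intro cadd_fin[OF U]) (auto simp: disjoint_family_on_def intro: bounded_subset)
    moreover have "(\<Union>i\<in>I. P i \<inter> J) = J" using I(4) by auto
    ultimately show ?thesis by simp
  qed
  finally have r: "(\<Sum>i\<in>I. \<bar>f (P i)\<bar>) \<le> (\<Sum>i\<in>I. \<bar>f (P i \<inter> A)\<bar>) + U J" .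
  have mem: "(I, \<lambda>i. P i \<inter> A) \<in> Parts A"
    using I A by (auto simp: disjoint_family_on_def Parts_def)
  have "ereal (\<Sum>i\<in>I. \<bar>f (P i \<inter> A)\<bar>) \<le> tv_setfun f A"
    using tv_upper[OF mem] by simp
  hence "ereal (\<Sum>i\<in>I. \<bar>f (P i \<inter> A)\<bar>) + ereal (U J) \<le> tv_setfun f A + ereal (U J)"
    by (rule add_right_mono)
  moreover have "ereal (\<Sum>i\<in>I. \<bar>f (P i)\<bar>) \<le> ereal (\<Sum>i\<in>I. \<bar>f (P i \<inter> A)\<bar>) + ereal (U J)"
    using r by simp
  ultimately show "ereal (\<Sum>i\<in>I. \<bar>f (P i)\<bar>) \<le> tv_setfun f A + ereal (U J)" by (rule order_trans[rotated])
qed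

lemma far_case:
  fixes z :: complex and x0 r a :: real
  assumes y: "Im z > 0" and r: "r > 0" and rx: "r \<le> \<bar>x0\<bar>" and a: "0 < a" "a < 1"
    and far: "cmod z > 3 / a * \<bar>x0\<bar>"
  shows "th z x0 r / pi \<le> r / (1 - a)\<^sup>2 * \<bar>Im (1 / z)\<bar>" "cmod z \<ge> \<bar>x0\<bar>"
proof -
  define m where "m = cmod z"
  define q where "q = \<bar>x0\<bar>"
  define \<rho> where "\<rho> = cmod (z - complex_of_real x0)"
  have q0: "q > 0" using r rx by (simp add: q_def)
  have "3 / a * q \<ge> 3 * q" using a q0 by (simp add: field_simps)
  hence m3: "m > 3 * q" using far by (simp add: m_def q_def)
  show "cmod z \<ge> \<bar>x0\<bar>" using m3 q0 by (simp add: m_def q_def)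
  have qa: "q < a * m / 3" using far a by (simp add: m_def q_def field_simps)
  have rho1: "\<rho> \<ge> m - q"
    using norm_triangle_ineq2[of z "complex_of_real x0"] by (simp add: \<rho>_def m_def q_def)
  have mq: "m - q > 0" using m3 q0 by simp
  have "(m - q)\<^sup>2 \<le> \<rho>\<^sup>2" using rho1 mq by (intro power_mono) auto
  moreover have "r\<^sup>2 \<le> q\<^sup>2" using rx r by (intro power_mono) (auto simp: q_def)
  ultimately have "\<rho>\<^sup>2 - r\<^sup>2 \<ge> m\<^sup>2 - 2 * m * q" by (simp add: power2_eq_square algebra_simps)
  moreover have "2 * m * q \<le> 2 * m * (a * m / 3)" using qa m3 q0 by (intro mult_left_mono) auto
  moreover have "m\<^sup>2 - 2 * m * (a * m / 3) \<ge> m\<^sup>2 * (1 - a)"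
    using a by (simp add: power2_eq_square algebra_simps)
  ultimately have d: "\<rho>\<^sup>2 - r\<^sup>2 \<ge> m\<^sup>2 * (1 - a)" by linarith
  have m0: "m > 0" using m3 q0 by simp
  have dpos: "m\<^sup>2 * (1 - a) > 0" using m0 a by simp
  have out: "\<rho> > r" using rho1 m3 rx q0 by (simp add: q_def)
  have "th z x0 r \<le> 2 * r * Im z / (\<rho>\<^sup>2 - r\<^sup>2)" using th_out(2)[OF y r] out by (simp add: \<rho>_def)
  also have "\<dots> \<le> 2 * r * Im z / (m\<^sup>2 * (1 - a))"
    using d dpos r y by (intro divide_left_mono) (auto intro: mult_pos_pos)
  finally have t1: "th z x0 r \<le> 2 * r * Im z / (m\<^sup>2 * (1 - a))" .
  have "th z x0 r / pi \<le> 2 * r * Im z / (m\<^sup>2 * (1 - a)) / pi"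
    using t1 by (intro divide_right_mono) auto
  also have "\<dots> = (2 / (pi * (1 - a))) * (r * (Im z / m\<^sup>2))" by (simp add: field_simps)
  also have "\<dots> \<le> (1 / (1 - a)\<^sup>2) * (r * (Im z / m\<^sup>2))"
  proof (rule mult_right_mono)
    have "2 * (1 - a) \<le> pi" using a pi_gt3 by simp
    hence "2 * (1 - a)\<^sup>2 \<le> pi * (1 - a)" using a by (simp add: power2_eq_square)
    thus "2 / (pi * (1 - a)) \<le> 1 / (1 - a)\<^sup>2" using a pi_gt_zero
      by (simp add: field_simps)
    show "0 \<le> r * (Im z / m\<^sup>2)" using r y by simp
  qed
  also have "\<dots> = r / (1 - a)\<^sup>2 * \<bar>Im (1 / z)\<bar>"
    using y by (simp add: Im_inv m_def)
  finally show "th z x0 r / pi \<le> r / (1 - a)\<^sup>2 * \<bar>Im (1 / z)\<bar>" .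
qed

lemma inv_sq_int:
  assumes "0 < c" "c \<le> d"
  shows "(\<integral>\<^sup>+ t. ennreal (indicator {c..d} t * (1 / t\<^sup>2)) \<partial>lborel) = ennreal (1 / c - 1 / d)"
proof -
  have "((\<lambda>t. 1 / t\<^sup>2) has_integral ((- 1 / d) - (- 1 / c))) {c..d}"
  proof (rule fundamental_theorem_of_calculus)
    show "c \<le> d" by fact
    fix t assume t: "t \<in> {c..d}"
    hence "t \<noteq> 0" using assms by auto
    hence "((\<lambda>t. - 1 / t) has_real_derivative (1 / t\<^sup>2)) (at t)"
      by (auto intro!: derivative_eq_intros simp: power2_eq_square)
    thus "((\<lambda>t. - 1 / t) has_vector_derivative (1 / t\<^sup>2)) (at t within {c..d})"
      by (simp add: has_real_derivative_iff_has_vector_derivative has_vector_derivative_at_within)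
  qed
  hence "((\<lambda>t. 1 / t\<^sup>2) has_integral (1 / c - 1 / d)) {c..d}" by simp
  from nn_integral_has_integral_lebesgue[OF _ this] show ?thesis by simp
qed

definition Gf :: "complex \<Rightarrow> real \<Rightarrow> real \<Rightarrow> complex \<Rightarrow> ennreal" where
  "Gf c r s z = (\<integral>\<^sup>+ t. indicator {r..s} t * indicator (cball c t) z * ennreal (1 / t\<^sup>2) \<partial>lborel)"

lemma Gf_low:
  assumes r: "0 < r" and rho: "r \<le> dist c z" "dist c z \<le> s"
  shows "ennreal (1 / dist c z - 1 / s) \<le> Gf c r s z"
proof -
  have "ennreal (1 / dist c z - 1 / s) = (\<integral>\<^sup>+ t. ennreal (indicator {dist c z..s} t * (1 / t\<^sup>2)) \<partial>lborel)"
    using r rho by (intro inv_sq_int[symmetric]) auto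
  also have "\<dots> \<le> Gf c r s z" unfolding Gf_def
    using rho by (intro nn_integral_mono) (auto simp: indicator_def)
  finally show ?thesis .
qed


lemma e1: "(x::ennreal) \<le> a \<Longrightarrow> x \<le> a + b + c + d"
  by (rule order_trans[of _ a]) (auto simp: add.assoc intro: add_increasing2)
lemma e2: "(x::ennreal) \<le> b \<Longrightarrow> x \<le> a + b + c + d"
  by (rule order_trans[of _ b]) (auto simp: add.assoc intro!: add_increasing add_increasing2)
lemma e3: "(x::ennreal) \<le> c \<Longrightarrow> x \<le> a + b + c + d"
  by (rule order_trans[of _ c]) (auto simp: add.assoc intro!: add_increasing add_increasing2)
lemma e24: "(x::ennreal) \<le> d + b \<Longrightarrow> x \<le> a + b + c + d"
proof -
  assume "x \<le> d + b"
  moreover have "d + b \<le> a + b + c + d" by (simp add: add.commute add.left_commute add_increasing)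
  ultimately show ?thesis by (rule order_trans)
qed

lemma pw_upper:
  fixes z :: complex and x0 r a :: real
  assumes y: "Im z > 0" and r: "r > 0" and rx: "r \<le> \<bar>x0\<bar>" and a: "0 < a" "a < 1"
  shows "ennreal (th z x0 r / pi) \<le>
      indicator (cball (complex_of_real x0) r \<inter> upper_closed) z
    + ennreal (2 * r / (a * \<bar>x0\<bar>)) * indicator (cball 0 (3 / a * \<bar>x0\<bar>) \<inter> upper_closed) z
    + ennreal (r / (1 - a)\<^sup>2) * (indicator ({z. cmod z \<ge> \<bar>x0\<bar>} \<inter> upper_closed) z * ennreal \<bar>Im (1 / z)\<bar>)
    + ennreal r * (indicator upper_closed z * Gf (complex_of_real x0) r (a * \<bar>x0\<bar>) z)"
proof -
  have zU: "z \<in> upper_closed" using y by (simp add: upper_closed_def)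
  define \<rho> where "\<rho> = dist (complex_of_real x0) z"
  have rho_eq: "cmod (z - complex_of_real x0) = \<rho>" by (simp add: \<rho>_def dist_norm norm_minus_commute)
  have q0: "\<bar>x0\<bar> > 0" using r rx by simp
  define s where "s = a * \<bar>x0\<bar>"
  have s0: "s > 0" using a q0 by (simp add: s_def)
  show ?thesis
  proof (cases "\<rho> \<le> r")
    case True
    have "th z x0 r / pi \<le> 1" using th_basic(2)[OF y r, of x0] by simp
    hence "ennreal (th z x0 r / pi) \<le> indicator (cball (complex_of_real x0) r \<inter> upper_closed) z"
      using True zU by (simp add: \<rho>_def)
    thus ?thesis by (rule e1)
  next
    case out: False
    hence out': "cmod (z - complex_of_real x0) > r" by (simp add: rho_eq)
    have rat: "th z x0 r / pi \<le> r / \<rho>"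
      using th_ratio[OF y r out'] pi_gt_zero by (simp add: rho_eq field_simps)
    show ?thesis
    proof (cases "cmod z > 3 / a * \<bar>x0\<bar>")
      case True
      note fc = far_case[OF y r rx a True]
      have "ennreal (th z x0 r / pi) \<le> ennreal (r / (1 - a)\<^sup>2 * \<bar>Im (1 / z)\<bar>)"
        using fc(1) by (rule ennreal_leI)
      also have "\<dots> = ennreal (r / (1 - a)\<^sup>2) * (indicator ({z. cmod z \<ge> \<bar>x0\<bar>} \<inter> upper_closed) z * ennreal \<bar>Im (1 / z)\<bar>)"
        using fc(2) zU r ennreal_mult[of "r / (1 - a)\<^sup>2" "\<bar>Im (1 / z)\<bar>"] by simp
      finally show ?thesis by (rule e3)
    next
      case near: False
      have ind2: "indicator (cball 0 (3 / a * \<bar>x0\<bar>) \<inter> upper_closed) z = (1::ennreal)"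
        using near zU by simp
      show ?thesis
      proof (cases "\<rho> \<le> s")
        case False
        have "r / \<rho> \<le> r / s" using False s0 r by (intro divide_left_mono) auto
        also have "\<dots> \<le> 2 * r / s"
        proof -
          have "r / s > 0" using r s0 by simp
          moreover have "2 * r / s = r / s + r / s" by (simp add: add_divide_distrib[symmetric])
          ultimately show ?thesis by linarith
        qed
        also have "2 * r / s = 2 * r / (a * \<bar>x0\<bar>)" by (simp add: s_def)
        finally have "ennreal (th z x0 r / pi) \<le> ennreal (2 * r / (a * \<bar>x0\<bar>))"
          using rat by (intro ennreal_leI) linarith
        thus ?thesis using ind2 by (intro e2) simp
      next
        case True
        have rp: "\<rho> > 0" using out r by simp
        have "r / \<rho> = r * (1 / \<rho> - 1 / s) + r / s" using s0 rp by (simp add: field_simps)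
        also have "\<dots> \<le> r * (1 / \<rho> - 1 / s) + 2 * r / (a * \<bar>x0\<bar>)"
        proof -
          have "r / s > 0" using r s0 by simp
          moreover have "2 * r / s = r / s + r / s" by (simp add: add_divide_distrib[symmetric])
          ultimately show ?thesis by (simp add: s_def)
        qed
        finally have le: "th z x0 r / pi \<le> r * (1 / \<rho> - 1 / s) + 2 * r / (a * \<bar>x0\<bar>)" using rat by linarith
        have nn: "1 / \<rho> - 1 / s \<ge> 0" using True rp by (simp add: field_simps)
        have "ennreal (th z x0 r / pi) \<le> ennreal (r * (1 / \<rho> - 1 / s) + 2 * r / (a * \<bar>x0\<bar>))"
          using le by (rule ennreal_leI)
        also have "\<dots> = ennreal r * ennreal (1 / \<rho> - 1 / s) + ennreal (2 * r / (a * \<bar>x0\<bar>))"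
          using nn r q0 a by (simp add: ennreal_plus[symmetric] ennreal_mult)
        also have "\<dots> \<le> ennreal r * (indicator upper_closed z * Gf (complex_of_real x0) r (a * \<bar>x0\<bar>) z)
            + ennreal (2 * r / (a * \<bar>x0\<bar>)) * indicator (cball 0 (3 / a * \<bar>x0\<bar>) \<inter> upper_closed) z"
          using Gf_low[OF r, of "complex_of_real x0" z s] out True zU ind2
          by (intro add_mono mult_left_mono) (auto simp: \<rho>_def s_def)
        finally show ?thesis by (rule e24)
      qed
    qed
  qed
qed

lemma okm_space: assumes "okm M" shows "space M = UNIV"
proof -
  have "sets M = sets borel" by (rule okm_sets[OF assms])
  hence "space M = space borel" by (rule sets_eq_imp_space_eq)
  thus ?thesis by simp
qed

lemma okm_sf: assumes M: "okm M" shows "sigma_finite_measure M"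
proof -
  define A where "A = range (\<lambda>n::nat. cball (0::complex) (real n))"
  have c: "countable A" unfolding A_def by (rule countable_image) simp
  have s: "A \<subseteq> sets M" unfolding A_def okm_sets[OF M] by auto
  have all: "z \<in> \<Union>A" for z
  proof -
    have "z \<in> cball 0 (real (nat \<lceil>cmod z\<rceil>))"
      using real_nat_ceiling_ge[of "cmod z"] by simp
    thus ?thesis unfolding A_def by (rule UN_I[OF UNIV_I])
  qed
  have u: "\<Union>A = space M" unfolding okm_space[OF M] using all by auto
  have e: "\<forall>a\<in>A. emeasure M a \<noteq> \<infinity>"
  proof
    fix a assume "a \<in> A"
    then obtain n where a: "a = cball 0 (real n)" unfolding A_def by blast
    have "emeasure M a < \<infinity>" unfolding a by (rule okm_bdd_fin[OF M]) simp
    thus "emeasure M a \<noteq> \<infinity>" by (rule less_imp_neq)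
  qed
  show ?thesis unfolding sigma_finite_measure_def
    by (rule exI[of _ A]) (intro conjI c s u e)
qed

lemma cball_ind: "indicator (cball c t) z = (of_bool (dist c z \<le> t) :: ennreal)"
  by (simp add: indicator_def)

lemma Gf_meas [measurable]: "Gf c r s \<in> borel_measurable borel"
proof -
  have "(\<lambda>(z, t). indicator {r..s} t * indicator (cball c t) z * ennreal (1 / t\<^sup>2)) \<in> borel_measurable (borel \<Otimes>\<^sub>M lborel)"
    unfolding cball_ind by measurable
  from lborel.borel_measurable_nn_integral[OF this] show ?thesis
    unfolding Gf_def[abs_def] by simp
qed

lemma Ton:
  assumes M: "okm M"
  shows "(\<integral>\<^sup>+ z. indicator upper_closed z * Gf c r s z \<partial>M)
       = (\<integral>\<^sup>+ t. indicator {r..s} t * ennreal (1 / t\<^sup>2) * emeasure M (cball c t \<inter> upper_closed) \<partial>lborel)"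
proof -
  interpret sf: sigma_finite_measure M by (rule okm_sf[OF M])
  interpret pair_sigma_finite lborel M by unfold_locales
  define f where "f t z = indicator {r..s} t * indicator (cball c t) z * ennreal (1 / t\<^sup>2) * indicator upper_closed z" for t z
  have sets_eq: "sets (lborel \<Otimes>\<^sub>M M) = sets (lborel \<Otimes>\<^sub>M borel)"
    by (intro sets_pair_measure_cong) (auto simp: okm_sets[OF M])
  have fm: "case_prod f \<in> borel_measurable (lborel \<Otimes>\<^sub>M M)"
  proof -
    have "case_prod f \<in> borel_measurable (lborel \<Otimes>\<^sub>M borel)"
      unfolding f_def cball_ind by measurable
    thus ?thesis using measurable_cong_sets[OF sets_eq refl] by blast
  qed
  have "(\<integral>\<^sup>+ z. indicator upper_closed z * Gf c r s z \<partial>M) = (\<integral>\<^sup>+ z. (\<integral>\<^sup>+ t. f t z \<partial>lborel) \<partial>M)"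
    unfolding Gf_def f_def
  proof (intro nn_integral_cong)
    fix z
    have mt: "(\<lambda>t. indicator {r..s} t * indicator (cball c t) z * ennreal (1 / t\<^sup>2)) \<in> borel_measurable lborel"
      unfolding cball_ind by measurable
    show "indicator upper_closed z * (\<integral>\<^sup>+ t. indicator {r..s} t * indicator (cball c t) z * ennreal (1 / t\<^sup>2) \<partial>lborel)
      = (\<integral>\<^sup>+ t. indicator {r..s} t * indicator (cball c t) z * ennreal (1 / t\<^sup>2) * indicator upper_closed z \<partial>lborel)"
      using nn_integral_cmult[OF mt, of "indicator upper_closed z"] by (simp add: mult.commute)
  qed
  also have "\<dots> = (\<integral>\<^sup>+ t. (\<integral>\<^sup>+ z. f t z \<partial>M) \<partial>lborel)"
    using Fubini'[OF fm] by simp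
  also have "\<dots> = (\<integral>\<^sup>+ t. indicator {r..s} t * ennreal (1 / t\<^sup>2) * emeasure M (cball c t \<inter> upper_closed) \<partial>lborel)"
  proof (intro nn_integral_cong)
    fix t
    have cs: "cball c t \<inter> upper_closed \<in> sets M" using okm_sets[OF M] by auto
    have "(\<integral>\<^sup>+ z. f t z \<partial>M) = (\<integral>\<^sup>+ z. (indicator {r..s} t * ennreal (1 / t\<^sup>2)) * indicator (cball c t \<inter> upper_closed) z \<partial>M)"
      unfolding f_def by (intro nn_integral_cong) (simp add: indicator_inter_arith mult.commute mult.left_commute)
    also have "\<dots> = indicator {r..s} t * ennreal (1 / t\<^sup>2) * emeasure M (cball c t \<inter> upper_closed)"
      using cs by (rule nn_integral_cmult_indicator)
    finally show "(\<integral>\<^sup>+ z. f t z \<partial>M) = indicator {r..s} t * ennreal (1 / t\<^sup>2) * emeasure M (cball c t \<inter> upper_closed)" .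
  qed
  finally show ?thesis .
qed

lemma Vint_nn:
  assumes M: "okm M" and B: "B \<in> sets borel" "bounded B"
  shows "ennreal (Vint M B) = (\<integral>\<^sup>+ z. ennreal (indicator upper_open z * harm z B) \<partial>M)"
  unfolding Vint_def
proof (rule nn_integral_eq_integral[symmetric])
  show "integrable M (\<lambda>z. indicator upper_open z * harm z B)" by (rule Vint_props(1)[OF M B])
  show "AE z in M. 0 \<le> indicator upper_open z * harm z B"
    using harm_hn(2)[OF _ B] by (auto simp: upper_open_def indicator_def)
qed

lemma real_img_borel: "S \<in> sets borel \<Longrightarrow> complex_of_real ` S \<in> sets borel"
proof -
  assume S: "S \<in> sets borel"
  have "complex_of_real ` S = Re -` S \<inter> {z. Im z = 0}"
    by (auto simp: image_iff complex_eq_iff)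
  also have "\<dots> \<in> sets borel"
  proof -
    have "Re -` S \<inter> space borel \<in> sets borel" using S by (intro measurable_sets[of Re borel borel]) auto
    moreover have "closed {z::complex. Im z = 0}" by (intro closed_Collect_eq continuous_intros)
    ultimately show ?thesis by auto
  qed
  finally show ?thesis .
qed

lemma real_img_bounded: "complex_of_real ` {c..d} \<subseteq> cball 0 (max \<bar>c\<bar> \<bar>d\<bar>)"
  by auto

lemma harm_le_th:
  assumes y: "Im z > 0" and J: "J \<in> sets borel" "J \<subseteq> complex_of_real ` {x0 - r..x0 + r}" and r: "r > 0"
  shows "harm z J \<le> th z x0 r / pi"
proof -
  have Jb: "bounded J" using J(2) real_img_bounded[of "x0 - r" "x0 + r"]
    by (meson bounded_cball bounded_subset subset_trans)
  have "ennreal (pi * harm z J) = hn z J" using harm_hn(1)[OF y J(1) Jb] by simp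
  also have "\<dots> \<le> hn z (complex_of_real ` {x0 - r..x0 + r})"
    using y J(2) by (intro hn_mono) (auto simp: rset_def)
  also have "\<dots> = ennreal (th z x0 r)"
    using hn_interval[OF y, of "x0 - r" "x0 + r"] r by (simp add: th_def)
  finally have "pi * harm z J \<le> th z x0 r"
    using th_basic(1)[OF y r, of x0] by (simp add: ennreal_le_iff)
  thus ?thesis using pi_gt_zero by (simp add: field_simps)
qed


lemma V_bound:
  fixes x0 r a :: real
  assumes M: "okm M" and J: "J \<in> sets borel" "J \<subseteq> complex_of_real ` {x0 - r..x0 + r}"
    and r: "r > 0" and rx: "r \<le> \<bar>x0\<bar>" and a: "0 < a" "a < 1"
  shows "ennreal (V M J) \<le> emeasure M (cball (complex_of_real x0) r \<inter> upper_closed)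
    + ennreal (2 * r / (a * \<bar>x0\<bar>)) * emeasure M (cball 0 (3 / a * \<bar>x0\<bar>) \<inter> upper_closed)
    + ennreal (r / (1 - a)\<^sup>2) * (\<integral>\<^sup>+ z. indicator ({z. cmod z \<ge> \<bar>x0\<bar>} \<inter> upper_closed) z * ennreal \<bar>Im (1 / z)\<bar> \<partial>M)
    + ennreal r * (\<integral>\<^sup>+ z. indicator upper_closed z * Gf (complex_of_real x0) r (a * \<bar>x0\<bar>) z \<partial>M)"
proof -
  have Jb: "bounded J" using J(2) real_img_bounded[of "x0 - r" "x0 + r"]
    by (meson bounded_cball bounded_subset subset_trans)
  have Jreal: "Im z = 0" "dist (complex_of_real x0) z \<le> r" if "z \<in> J" for z
  proof -
    obtain t where t: "z = complex_of_real t" "t \<in> {x0 - r..x0 + r}" using J(2) \<open>z \<in> J\<close> by auto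
    show "Im z = 0" using t by simp
    have "dist (complex_of_real x0) z = \<bar>x0 - t\<bar>" using t(1) by (simp add: dist_norm flip: of_real_diff)
    thus "dist (complex_of_real x0) z \<le> r" using t(2) by auto
  qed
  have JM: "J \<in> sets M" using J(1) okm_sets[OF M] by simp
  have Jfin: "emeasure M J \<noteq> top" using okm_bdd_fin[OF M Jb] by simp
  have JL: "J \<inter> lower_closed = J" using Jreal(1) by (auto simp: lower_closed_def)
  have hm: "(\<lambda>z. indicator upper_open z * harm z J) \<in> borel_measurable M"
    using Vint_props(1)[OF M J(1) Jb] by (rule borel_measurable_integrable)
  define h where "h z = indicator (cball (complex_of_real x0) r \<inter> upper_closed) z
    + ennreal (2 * r / (a * \<bar>x0\<bar>)) * indicator (cball 0 (3 / a * \<bar>x0\<bar>) \<inter> upper_closed) z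
    + ennreal (r / (1 - a)\<^sup>2) * (indicator ({z. cmod z \<ge> \<bar>x0\<bar>} \<inter> upper_closed) z * ennreal \<bar>Im (1 / z)\<bar>)
    + ennreal r * (indicator upper_closed z * Gf (complex_of_real x0) r (a * \<bar>x0\<bar>) z)" for z
  have pw: "ennreal (indicator upper_open z * harm z J) + indicator J z \<le> h z" for z
  proof (cases "Im z > 0")
    case True
    have "z \<notin> J" using Jreal(1) True by force
    moreover have "z \<in> upper_open" using True by (simp add: upper_open_def)
    moreover have "ennreal (harm z J) \<le> ennreal (th z x0 r / pi)"
      using harm_le_th[OF True J r] by (rule ennreal_leI)
    ultimately show ?thesis using pw_upper[OF True r rx a] unfolding h_def by simp
  next
    case False
    hence "z \<notin> upper_open" by (simp add: upper_open_def)
    moreover have "indicator J z \<le> (indicator (cball (complex_of_real x0) r \<inter> upper_closed) z :: ennreal)"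
      using Jreal by (auto simp: indicator_def upper_closed_def)
    ultimately show ?thesis unfolding h_def by (simp add: e1)
  qed
  have m1: "(\<lambda>z. ennreal \<bar>Im (1 / z)\<bar>) \<in> borel_measurable M"
    unfolding Im_inv by (intro okm_meas[OF M]) measurable
  have m2: "Gf (complex_of_real x0) r (a * \<bar>x0\<bar>) \<in> borel_measurable M"
    by (intro okm_meas[OF M] Gf_meas)
  have sM: "cball (complex_of_real x0) r \<inter> upper_closed \<in> sets M"
    "cball 0 (3 / a * \<bar>x0\<bar>) \<inter> upper_closed \<in> sets M"
    "{z. cmod z \<ge> \<bar>x0\<bar>} \<inter> upper_closed \<in> sets M" "upper_closed \<in> sets M"
    using okm_sets[OF M] by (auto intro!: sets.Int borel_closed closed_Collect_le continuous_intros)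
  have "ennreal (V M J) = ennreal (Vint M J) + emeasure M J"
    unfolding V_def JL using Vint_props(3)[OF M J(1) Jb]
    by (simp add: ennreal_plus emeasure_eq_ennreal_measure[OF Jfin])
  also have "\<dots> = (\<integral>\<^sup>+ z. ennreal (indicator upper_open z * harm z J) + indicator J z \<partial>M)"
    using hm JM by (simp add: Vint_nn[OF M J(1) Jb] nn_integral_add nn_integral_indicator)
  also have "\<dots> \<le> (\<integral>\<^sup>+ z. h z \<partial>M)" by (intro nn_integral_mono pw)
  also have "\<dots> = emeasure M (cball (complex_of_real x0) r \<inter> upper_closed)
    + ennreal (2 * r / (a * \<bar>x0\<bar>)) * emeasure M (cball 0 (3 / a * \<bar>x0\<bar>) \<inter> upper_closed)
    + ennreal (r / (1 - a)\<^sup>2) * (\<integral>\<^sup>+ z. indicator ({z. cmod z \<ge> \<bar>x0\<bar>} \<inter> upper_closed) z * ennreal \<bar>Im (1 / z)\<bar> \<partial>M)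
    + ennreal r * (\<integral>\<^sup>+ z. indicator upper_closed z * Gf (complex_of_real x0) r (a * \<bar>x0\<bar>) z \<partial>M)"
    unfolding h_def using m1 m2 sM
    by (simp add: nn_integral_add nn_integral_cmult nn_integral_indicator)
  finally show ?thesis .
qed


lemma mM_facts:
  fixes c :: complex
  assumes M: "okm M"
  defines "mM \<equiv> \<lambda>t. measure M (cball c t \<inter> upper_closed)"
  shows "\<And>t. emeasure M (cball c t \<inter> upper_closed) = ennreal (mM t)" "mono mM" "\<And>t. mM t \<ge> 0"
proof -
  have fin: "emeasure M (cball c t \<inter> upper_closed) \<noteq> top" for t
  proof -
    have "bounded (cball c t \<inter> upper_closed)" by (rule bounded_Int) simp
    from okm_bdd_fin[OF M this] show ?thesis by simp
  qed
  show "emeasure M (cball c t \<inter> upper_closed) = ennreal (mM t)" for t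
    unfolding mM_def by (rule emeasure_eq_ennreal_measure[OF fin])
  show "mono mM"
  proof (rule monoI)
    fix t u :: real assume "t \<le> u"
    hence "emeasure M (cball c t \<inter> upper_closed) \<le> emeasure M (cball c u \<inter> upper_closed)"
      using okm_sets[OF M] by (intro emeasure_mono) auto
    thus "mM t \<le> mM u" unfolding mM_def measure_def
      using fin[of u] by (intro enn2real_mono) (auto simp: top.not_eq_extremum)
  qed
  show "mM t \<ge> 0" for t by (simp add: mM_def)
qed


lemma Lbound:
  fixes c :: complex and r s :: real
  assumes np: "okm np" and nn: "okm nn" and r: "r > 0"
  shows "(\<integral>\<^sup>+ t. indicator {r..s} t * ennreal (1 / t\<^sup>2) * emeasure np (cball c t \<inter> upper_closed) \<partial>lborel)
       + (\<integral>\<^sup>+ t. indicator {r..s} t * ennreal (1 / t\<^sup>2) * emeasure nn (cball c t \<inter> upper_closed) \<partial>lborel)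
       \<le> ennreal (max 0 (LBINT t = r..s. enn2real (tv_up np nn (cball c t)) / t\<^sup>2))"
proof -
  define mp where "mp t = measure np (cball c t \<inter> upper_closed)" for t
  define mn where "mn t = measure nn (cball c t \<inter> upper_closed)" for t
  note fp = mM_facts[OF np, of c, folded mp_def]
  note fn = mM_facts[OF nn, of c, folded mn_def]
  define g where "g t = enn2real (tv_up np nn (cball c t))" for t
  have g_eq: "g t = mp t + mn t" for t
    unfolding g_def tv_up_def tv_nu_def using fp(1)[of t] fn(1)[of t] fp(3)[of t] fn(3)[of t]
    by (simp add: Int_commute Int_left_commute Int_assoc ennreal_plus[symmetric] del: ennreal_plus)
  have [measurable]: "mp \<in> borel_measurable borel" "mn \<in> borel_measurable borel"
    using fp(2) fn(2) by (auto intro: borel_measurable_mono)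
  have gm [measurable]: "g \<in> borel_measurable borel" unfolding g_eq[abs_def] by measurable
  have eqi: "indicator {r..s} t * ennreal (1 / t\<^sup>2) * ennreal (m t) = ennreal (indicator {r..s} t * (1 / t\<^sup>2) * m t)"
    if "m t \<ge> 0" for t and m :: "real \<Rightarrow> real"
    using that ennreal_mult[of "1 / t\<^sup>2" "m t"] by (simp add: indicator_def)
  have "(\<integral>\<^sup>+ t. indicator {r..s} t * ennreal (1 / t\<^sup>2) * emeasure np (cball c t \<inter> upper_closed) \<partial>lborel)
       + (\<integral>\<^sup>+ t. indicator {r..s} t * ennreal (1 / t\<^sup>2) * emeasure nn (cball c t \<inter> upper_closed) \<partial>lborel)
       = (\<integral>\<^sup>+ t. ennreal (indicator {r..s} t * (1 / t\<^sup>2) * mp t) \<partial>lborel)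
       + (\<integral>\<^sup>+ t. ennreal (indicator {r..s} t * (1 / t\<^sup>2) * mn t) \<partial>lborel)"
    using fp(1,3) fn(1,3) eqi by simp
  also have "\<dots> = (\<integral>\<^sup>+ t. ennreal (indicator {r..s} t * (1 / t\<^sup>2) * mp t) + ennreal (indicator {r..s} t * (1 / t\<^sup>2) * mn t) \<partial>lborel)"
    by (rule nn_integral_add[symmetric]) measurable
  also have "\<dots> = (\<integral>\<^sup>+ t. ennreal (indicator {r..s} t * (g t / t\<^sup>2)) \<partial>lborel)"
    using fp(3) fn(3) by (intro nn_integral_cong) (simp add: g_eq ennreal_plus[symmetric] algebra_simps add_divide_distrib del: ennreal_plus)
  also have "\<dots> \<le> ennreal (max 0 (LBINT t = r..s. g t / t\<^sup>2))"
  proof (cases "r \<le> s")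
    case False
    hence "{r..s} = {}" by simp
    thus ?thesis by simp
  next
    case True
    have nn0: "0 \<le> indicator {r..s} t * (g t / t\<^sup>2)" for t using fp(3) fn(3) by (simp add: g_eq)
    have fin: "(\<integral>\<^sup>+ t. ennreal (indicator {r..s} t * (g t / t\<^sup>2)) \<partial>lborel) < \<infinity>"
    proof -
      have "(\<integral>\<^sup>+ t. ennreal (indicator {r..s} t * (g t / t\<^sup>2)) \<partial>lborel)
          \<le> (\<integral>\<^sup>+ t. ennreal (g s / r\<^sup>2) * indicator {r..s} t \<partial>lborel)"
      proof (intro nn_integral_mono)
        fix t
        show "ennreal (indicator {r..s} t * (g t / t\<^sup>2)) \<le> ennreal (g s / r\<^sup>2) * indicator {r..s} t"
        proof (cases "t \<in> {r..s}")
          case True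
          have gm: "g t \<le> g s" using True fp(2) fn(2) by (simp add: g_eq add_mono monoD)
          have "r\<^sup>2 \<le> t\<^sup>2" using True r by (intro power_mono) auto
          hence "g t / t\<^sup>2 \<le> g s / r\<^sup>2" using gm r fp(3) fn(3) True
            by (intro frac_le) (auto simp: g_eq)
          thus ?thesis using True by (simp add: ennreal_leI)
        qed simp
      qed
      also have "\<dots> = ennreal (g s / r\<^sup>2) * ennreal (s - r)"
        using True by (simp add: nn_integral_cmult_indicator)
      also have "\<dots> < \<infinity>" by (simp add: ennreal_mult_less_top)
      finally show ?thesis .
    qed
    have int: "integrable lborel (\<lambda>t. indicator {r..s} t * (g t / t\<^sup>2))"
      using fin nn0 by (intro integrableI_nonneg) auto
    have "(\<integral>\<^sup>+ t. ennreal (indicator {r..s} t * (g t / t\<^sup>2)) \<partial>lborel)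
        = ennreal (\<integral>t. indicator {r..s} t * (g t / t\<^sup>2) \<partial>lborel)"
      using int nn0 by (intro nn_integral_eq_integral) auto
    also have "(\<integral>t. indicator {r..s} t * (g t / t\<^sup>2) \<partial>lborel) = (LBINT t = r..s. g t / t\<^sup>2)"
      using True by (simp add: interval_integral_Icc set_lebesgue_integral_def)
    finally show ?thesis by (simp add: ennreal_leI)
  qed
  finally show ?thesis unfolding g_def .
qed

lemma img_bdd: "S \<subseteq> {c..d} \<Longrightarrow> bounded (complex_of_real ` S)"
  using real_img_bounded[of c d] by (meson bounded_cball bounded_subset image_mono subset_trans)

lemma T_step:
  assumes f: "cadd f" and U: "cadd U" and domo: "\<forall>P. P \<in> sets borel \<longrightarrow> bounded P \<longrightarrow> \<bar>f P\<bar> \<le> U P"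
    and A: "A \<in> sets borel" and J: "J \<in> sets borel" and AJ: "A \<inter> J = {}" and bd: "bounded (A \<union> J)"
  shows "0 \<le> real_of_ereal (tv_setfun f (A \<union> J)) - real_of_ereal (tv_setfun f A)"
    "real_of_ereal (tv_setfun f (A \<union> J)) - real_of_ereal (tv_setfun f A) \<le> U J"
proof -
  have dom: "\<And>P. P \<in> sets borel \<Longrightarrow> bounded P \<Longrightarrow> \<bar>f P\<bar> \<le> U P" using domo by blast
  have Ab: "bounded A" using bd by simp
  have Jb: "bounded J" using bd by simp
  have AJs: "A \<union> J \<in> sets borel" using A J by simp
  have u1: "tv_setfun f A \<le> ereal (U A)" by (rule tv_le_U[OF f U dom Ab])
  have u2: "tv_setfun f (A \<union> J) \<le> ereal (U (A \<union> J))" by (rule tv_le_U[OF f U dom bd])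
  have l1: "0 \<le> tv_setfun f A" by (rule tv_nonneg[OF A])
  have l2: "0 \<le> tv_setfun f (A \<union> J)" by (rule tv_nonneg[OF AJs])
  obtain a where a: "tv_setfun f A = ereal a" using u1 l1 by (cases "tv_setfun f A") auto
  obtain b where b: "tv_setfun f (A \<union> J) = ereal b" using u2 l2 by (cases "tv_setfun f (A \<union> J)") auto
  have "tv_setfun f A \<le> tv_setfun f (A \<union> J)" by (rule tv_mono_union[OF A J AJ])
  thus "0 \<le> real_of_ereal (tv_setfun f (A \<union> J)) - real_of_ereal (tv_setfun f A)" using a b by simp
  have "tv_setfun f (A \<union> J) \<le> tv_setfun f A + ereal (U J)" by (rule tv_union_le[OF f U dom A J AJ bd])
  thus "real_of_ereal (tv_setfun f (A \<union> J)) - real_of_ereal (tv_setfun f A) \<le> U J" using a b by simp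
qed

lemma T_bounds:
  assumes f: "cadd f" and U: "cadd U" and domo: "\<forall>P. P \<in> sets borel \<longrightarrow> bounded P \<longrightarrow> \<bar>f P\<bar> \<le> U P"
    and B: "B \<in> sets borel" "bounded B"
  shows "0 \<le> real_of_ereal (tv_setfun f B)" "real_of_ereal (tv_setfun f B) \<le> U B"
proof -
  have dom: "\<And>P. P \<in> sets borel \<Longrightarrow> bounded P \<Longrightarrow> \<bar>f P\<bar> \<le> U P" using domo by blast
  have u1: "tv_setfun f B \<le> ereal (U B)" by (rule tv_le_U[OF f U dom B(2)])
  have l1: "0 \<le> tv_setfun f B" by (rule tv_nonneg[OF B(1)])
  obtain a where a: "tv_setfun f B = ereal a" using u1 l1 by (cases "tv_setfun f B") auto
  show "0 \<le> real_of_ereal (tv_setfun f B)" using a l1 by simp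
  show "real_of_ereal (tv_setfun f B) \<le> U B" using a u1 by simp
qed


theorem theorem1:
  fixes np nn :: "complex measure"
  assumes charge: "charge_pair np nn"
    and blaschke: "\<exists>r0 > 0.
        (\<integral>\<^sup>+ z. indicator (upper_open - ball 0 r0) z * ennreal (Im (1 / cnj z)) \<partial>np)
      + (\<integral>\<^sup>+ z. indicator (upper_open - ball 0 r0) z * ennreal (Im (1 / cnj z)) \<partial>nn) < \<infinity>"
  shows
    "(\<forall>B \<in> sets borel. bounded B \<longrightarrow>
        integrable np (\<lambda>z. indicator upper_open z * harm z B) \<and>
        integrable nn (\<lambda>z. indicator upper_open z * harm z B))
   \<and> (\<forall>A :: nat \<Rightarrow> complex set. range A \<subseteq> sets borel \<longrightarrow> disjoint_family A \<longrightarrow>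
        bounded (\<Union>n. A n) \<longrightarrow> (\<lambda>n. bal np nn (A n)) sums bal np nn (\<Union>n. A n))
   \<and> (\<forall>B \<in> sets borel. bounded B \<longrightarrow> tv_setfun (bal np nn) B < \<infinity>)
   \<and> (\<forall>t1 t2 a :: real. t1 < t2 \<longrightarrow> t1 * t2 \<ge> 0 \<longrightarrow> 0 < a \<longrightarrow> a < 1 \<longrightarrow>
       (let x0 = (t1 + t2) / 2; r = (t2 - t1) / 2;
            F = distR (\<lambda>B. real_of_ereal (tv_setfun (bal np nn) B))
        in 0 \<le> F t2 - F t1 \<and>
           ennreal (F t2 - F t1)
             \<le> tv_up np nn (cball (complex_of_real x0) r)
              + ennreal (2 * r / (a * \<bar>x0\<bar>)) * tv_up np nn (cball 0 (3 / a * \<bar>x0\<bar>))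
              + ennreal (r / (1 - a)\<^sup>2) *
                  ((\<integral>\<^sup>+ z. indicator ({z. cmod z \<ge> \<bar>x0\<bar>} \<inter> upper_closed) z
                          * ennreal \<bar>Im (1 / z)\<bar> \<partial>np)
                 + (\<integral>\<^sup>+ z. indicator ({z. cmod z \<ge> \<bar>x0\<bar>} \<inter> upper_closed) z
                          * ennreal \<bar>Im (1 / z)\<bar> \<partial>nn))
              + ennreal (r * max 0 (LBINT t = r..a * \<bar>x0\<bar>.
                    enn2real (tv_up np nn (cball (complex_of_real x0) t)) / t\<^sup>2))))"
proof -
  have np: "okm np" and nn: "okm nn"
  proof -
    obtain r0 where r0: "r0 > 0" and bl: "(\<integral>\<^sup>+ z. indicator (upper_open - ball 0 r0) z * ennreal (Im (1 / cnj z)) \<partial>np)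
      + (\<integral>\<^sup>+ z. indicator (upper_open - ball 0 r0) z * ennreal (Im (1 / cnj z)) \<partial>nn) < \<infinity>"
      using blaschke by blast
    show "okm np" unfolding okm_def using charge r0 bl by (auto simp: charge_pair_def)
    show "okm nn" unfolding okm_def using charge r0 bl by (auto simp: charge_pair_def)
  qed
  define U where "U B = V np B + V nn B" for B
  have feq: "bal np nn = (\<lambda>B. V np B - V nn B)" by (rule ext) (rule bal_eq)
  have fc: "cadd (bal np nn)" unfolding feq by (intro cadd_diff V_cadd np nn)
  have Uc: "cadd U" unfolding U_def[abs_def] by (intro cadd_plus V_cadd np nn)
  have dom: "\<And>P. P \<in> sets borel \<Longrightarrow> bounded P \<Longrightarrow> \<bar>bal np nn P\<bar> \<le> U P"
  proof -
    fix P :: "complex set" assume P: "P \<in> sets borel" "bounded P"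
    show "\<bar>bal np nn P\<bar> \<le> U P"
      using V_nonneg[OF np P] V_nonneg[OF nn P] unfolding bal_eq U_def by linarith
  qed
  show ?thesis
  proof (intro conjI allI ballI impI)
    fix B :: "complex set" assume B: "B \<in> sets borel" "bounded B"
    show "integrable np (\<lambda>z. indicator upper_open z * harm z B)" by (rule Vint_props(1)[OF np B])
    show "integrable nn (\<lambda>z. indicator upper_open z * harm z B)" by (rule Vint_props(1)[OF nn B])
  next
    fix A :: "nat \<Rightarrow> complex set"
    assume "range A \<subseteq> sets borel" "disjoint_family A" "bounded (\<Union>n. A n)"
    thus "(\<lambda>n. bal np nn (A n)) sums bal np nn (\<Union>n. A n)" using fc unfolding cadd_def by blast
  next
    fix B :: "complex set" assume B: "B \<in> sets borel" "bounded B"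
    have "tv_setfun (bal np nn) B \<le> ereal (U B)" by (rule tv_le_U[OF fc Uc dom B(2)])
    thus "tv_setfun (bal np nn) B < \<infinity>" by (rule le_less_trans) simp
  next
    fix t1 t2 a :: real
    assume t12: "t1 < t2" and tt: "t1 * t2 \<ge> 0" and a: "0 < a" "a < 1"
    define x0 where "x0 = (t1 + t2) / 2"
    define r where "r = (t2 - t1) / 2"
    define F where "F = distR (\<lambda>B. real_of_ereal (tv_setfun (bal np nn) B))"
    have r0: "r > 0" using t12 by (simp add: r_def)
    have sgn: "0 \<le> t1 \<or> t2 \<le> 0"
    proof (rule ccontr)
      assume "\<not> (0 \<le> t1 \<or> t2 \<le> 0)"
      hence "t1 < 0" "t2 > 0" by auto
      hence "t1 * t2 < 0" by (simp add: mult_neg_pos)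
      thus False using tt by simp
    qed
    have rx: "r \<le> \<bar>x0\<bar>" using sgn t12 by (auto simp: r_def x0_def)
    have e1: "x0 - r = t1" "x0 + r = t2" by (simp_all add: x0_def r_def field_simps)
    have key: "ennreal (U J) \<le> tv_up np nn (cball (complex_of_real x0) r)
              + ennreal (2 * r / (a * \<bar>x0\<bar>)) * tv_up np nn (cball 0 (3 / a * \<bar>x0\<bar>))
              + ennreal (r / (1 - a)\<^sup>2) *
                  ((\<integral>\<^sup>+ z. indicator ({z. cmod z \<ge> \<bar>x0\<bar>} \<inter> upper_closed) z
                          * ennreal \<bar>Im (1 / z)\<bar> \<partial>np)
                 + (\<integral>\<^sup>+ z. indicator ({z. cmod z \<ge> \<bar>x0\<bar>} \<inter> upper_closed) z
                          * ennreal \<bar>Im (1 / z)\<bar> \<partial>nn))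
              + ennreal (r * max 0 (LBINT t = r..a * \<bar>x0\<bar>.
                    enn2real (tv_up np nn (cball (complex_of_real x0) t)) / t\<^sup>2))"
      if J: "J \<in> sets borel" "J \<subseteq> complex_of_real ` {t1..t2}" for J
    proof -
      have J': "J \<subseteq> complex_of_real ` {x0 - r..x0 + r}" using J(2) e1 by simp
      have Jb: "bounded J" using J(2) img_bdd[of "{t1..t2}" t1 t2]
        by (meson bounded_subset order_refl)
      define c where "c = complex_of_real x0"
      note b1 = V_bound[OF np J(1) J' r0 rx a, folded c_def]
      note b2 = V_bound[OF nn J(1) J' r0 rx a, folded c_def]
      note T1 = Ton[OF np, of c r "a * \<bar>x0\<bar>"] and T2 = Ton[OF nn, of c r "a * \<bar>x0\<bar>"]
      have LB: "(\<integral>\<^sup>+ z. indicator upper_closed z * Gf c r (a * \<bar>x0\<bar>) z \<partial>np) + (\<integral>\<^sup>+ z. indicator upper_closed z * Gf c r (a * \<bar>x0\<bar>) z \<partial>nn)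
         \<le> ennreal (max 0 (LBINT t = r..a * \<bar>x0\<bar>. enn2real (tv_up np nn (cball c t)) / t\<^sup>2))"
        unfolding T1 T2 by (rule Lbound[OF np nn r0])
      have "ennreal (U J) = ennreal (V np J) + ennreal (V nn J)"
        unfolding U_def using V_nonneg[OF np J(1) Jb] V_nonneg[OF nn J(1) Jb] by (simp add: ennreal_plus)
      also have "\<dots> \<le> (emeasure np (cball c r \<inter> upper_closed) + emeasure nn (cball c r \<inter> upper_closed))
          + ennreal (2 * r / (a * \<bar>x0\<bar>)) * (emeasure np (cball 0 (3 / a * \<bar>x0\<bar>) \<inter> upper_closed) + emeasure nn (cball 0 (3 / a * \<bar>x0\<bar>) \<inter> upper_closed))
          + ennreal (r / (1 - a)\<^sup>2) * ((\<integral>\<^sup>+ z. indicator ({z. cmod z \<ge> \<bar>x0\<bar>} \<inter> upper_closed) z * ennreal \<bar>Im (1 / z)\<bar> \<partial>np)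
                 + (\<integral>\<^sup>+ z. indicator ({z. cmod z \<ge> \<bar>x0\<bar>} \<inter> upper_closed) z * ennreal \<bar>Im (1 / z)\<bar> \<partial>nn))
          + ennreal r * ((\<integral>\<^sup>+ z. indicator upper_closed z * Gf c r (a * \<bar>x0\<bar>) z \<partial>np) + (\<integral>\<^sup>+ z. indicator upper_closed z * Gf c r (a * \<bar>x0\<bar>) z \<partial>nn))"
        using add_mono[OF b1 b2] by (simp add: algebra_simps)
      also have "\<dots> \<le> (emeasure np (cball c r \<inter> upper_closed) + emeasure nn (cball c r \<inter> upper_closed))
          + ennreal (2 * r / (a * \<bar>x0\<bar>)) * (emeasure np (cball 0 (3 / a * \<bar>x0\<bar>) \<inter> upper_closed) + emeasure nn (cball 0 (3 / a * \<bar>x0\<bar>) \<inter> upper_closed))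
          + ennreal (r / (1 - a)\<^sup>2) * ((\<integral>\<^sup>+ z. indicator ({z. cmod z \<ge> \<bar>x0\<bar>} \<inter> upper_closed) z * ennreal \<bar>Im (1 / z)\<bar> \<partial>np)
                 + (\<integral>\<^sup>+ z. indicator ({z. cmod z \<ge> \<bar>x0\<bar>} \<inter> upper_closed) z * ennreal \<bar>Im (1 / z)\<bar> \<partial>nn))
          + ennreal r * ennreal (max 0 (LBINT t = r..a * \<bar>x0\<bar>. enn2real (tv_up np nn (cball c t)) / t\<^sup>2))"
        by (intro add_left_mono mult_left_mono LB) auto
      also have "\<dots> = tv_up np nn (cball (complex_of_real x0) r)
              + ennreal (2 * r / (a * \<bar>x0\<bar>)) * tv_up np nn (cball 0 (3 / a * \<bar>x0\<bar>))
              + ennreal (r / (1 - a)\<^sup>2) *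
                  ((\<integral>\<^sup>+ z. indicator ({z. cmod z \<ge> \<bar>x0\<bar>} \<inter> upper_closed) z
                          * ennreal \<bar>Im (1 / z)\<bar> \<partial>np)
                 + (\<integral>\<^sup>+ z. indicator ({z. cmod z \<ge> \<bar>x0\<bar>} \<inter> upper_closed) z
                          * ennreal \<bar>Im (1 / z)\<bar> \<partial>nn))
              + ennreal (r * max 0 (LBINT t = r..a * \<bar>x0\<bar>.
                    enn2real (tv_up np nn (cball (complex_of_real x0) t)) / t\<^sup>2))"
        using r0 by (simp add: tv_up_def tv_nu_def c_def ennreal_mult)
      finally show ?thesis .
    qed
    define T where "T B = real_of_ereal (tv_setfun (bal np nn) B)" for B
    have FT: "F x = (if x \<ge> 0 then T (complex_of_real ` {0..x}) else - T (complex_of_real ` {x..<0}))" for x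
      by (simp add: F_def distR_def T_def)
    have domo: "\<forall>P. P \<in> sets borel \<longrightarrow> bounded P \<longrightarrow> \<bar>bal np nn P\<bar> \<le> U P"
      using dom by blast
    note step = T_step[OF fc Uc domo, folded T_def]
    note tb = T_bounds[OF fc Uc domo, folded T_def]
    have RB: "complex_of_real ` S \<in> sets borel" if "S \<in> sets borel" for S using that by (rule real_img_borel)
    have RU: "complex_of_real ` S \<union> complex_of_real ` S' = complex_of_real ` (S \<union> S')" for S S' :: "real set"
      by (rule image_Un[symmetric])
    have RI: "complex_of_real ` S \<inter> complex_of_real ` S' = {}" if "S \<inter> S' = {}" for S S' :: "real set"
      using that by auto
    have red: "\<exists>J. J \<in> sets borel \<and> J \<subseteq> complex_of_real ` {t1..t2} \<and> 0 \<le> F t2 - F t1 \<and> F t2 - F t1 \<le> U J"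
    proof (cases "0 \<le> t1")
      case True
      let ?A = "complex_of_real ` {0..t1}" and ?J = "complex_of_real ` {t1<..t2}"
      have un: "?A \<union> ?J = complex_of_real ` {0..t2}" unfolding RU using True t12
        by (intro arg_cong[where f="image complex_of_real"]) auto
      have bA: "?A \<in> sets borel" "?J \<in> sets borel" by (intro RB; simp)+
      have dj: "?A \<inter> ?J = {}" by (intro RI) auto
      have bd: "bounded (?A \<union> ?J)" unfolding un by (rule img_bdd[of _ 0 t2]) simp
      have "F t2 - F t1 = T (?A \<union> ?J) - T ?A" unfolding un FT using True t12 by simp
      moreover note step[OF bA dj bd]
      moreover have "?J \<subseteq> complex_of_real ` {t1..t2}" by auto
      ultimately show ?thesis using bA(2) by auto
    next
      case False
      hence t2: "t2 \<le> 0" using sgn by simp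
      show ?thesis
      proof (cases "t2 = 0")
        case False
        hence t2n: "t2 < 0" using t2 by simp
        let ?A = "complex_of_real ` {t2..<0}" and ?J = "complex_of_real ` {t1..<t2}"
        have un: "?A \<union> ?J = complex_of_real ` {t1..<0}" unfolding RU using t2n t12
          by (intro arg_cong[where f="image complex_of_real"]) auto
        have bA: "?A \<in> sets borel" "?J \<in> sets borel" by (intro RB; simp)+
        have dj: "?A \<inter> ?J = {}" by (intro RI) auto
        have bd: "bounded (?A \<union> ?J)" unfolding un by (rule img_bdd[of _ t1 0]) auto
        have "F t2 - F t1 = T (?A \<union> ?J) - T ?A" unfolding un FT using t2n t12 by simp
        moreover note step[OF bA dj bd]
        moreover have "?J \<subseteq> complex_of_real ` {t1..t2}" by auto
        ultimately show ?thesis using bA(2) by auto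
      next
        case True
        let ?A = "complex_of_real ` {0..0}" and ?B = "complex_of_real ` {t1..<0}"
        have un: "?A \<union> ?B = complex_of_real ` {t1..0}" unfolding RU using t12 True
          by (intro arg_cong[where f="image complex_of_real"]) auto
        have bA: "?A \<in> sets borel" "?B \<in> sets borel" by (intro RB; simp)+
        have dj: "?A \<inter> ?B = {}" by (intro RI) auto
        have bd: "bounded (?A \<union> ?B)" unfolding un by (rule img_bdd[of _ t1 0]) auto
        have bdA: "bounded ?A" "bounded ?B" using bd by auto
        have Uadd: "U (?A \<union> ?B) = U ?A + U ?B" by (rule cadd_two[OF Uc bA dj bd])
        have "F t2 - F t1 = T ?A + T ?B" unfolding FT using True t12 by simp
        moreover note tb[OF bA(1) bdA(1)] tb[OF bA(2) bdA(2)]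
        moreover have "complex_of_real ` {t1..0} \<subseteq> complex_of_real ` {t1..t2}" using True by auto
        moreover have "complex_of_real ` {t1..0} \<in> sets borel" by (intro RB) simp
        ultimately show ?thesis using Uadd un by (intro exI[of _ "complex_of_real ` {t1..0}"]) auto
      qed
    qed
    then obtain J where J: "J \<in> sets borel" "J \<subseteq> complex_of_real ` {t1..t2}" "0 \<le> F t2 - F t1" "F t2 - F t1 \<le> U J"
      by blast
    have "ennreal (F t2 - F t1) \<le> ennreal (U J)" using J(4) by (rule ennreal_leI)
    also note key[OF J(1,2)]
    finally have fin: "ennreal (F t2 - F t1) \<le> tv_up np nn (cball (complex_of_real x0) r)
              + ennreal (2 * r / (a * \<bar>x0\<bar>)) * tv_up np nn (cball 0 (3 / a * \<bar>x0\<bar>))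
              + ennreal (r / (1 - a)\<^sup>2) *
                  ((\<integral>\<^sup>+ z. indicator ({z. cmod z \<ge> \<bar>x0\<bar>} \<inter> upper_closed) z
                          * ennreal \<bar>Im (1 / z)\<bar> \<partial>np)
                 + (\<integral>\<^sup>+ z. indicator ({z. cmod z \<ge> \<bar>x0\<bar>} \<inter> upper_closed) z
                          * ennreal \<bar>Im (1 / z)\<bar> \<partial>nn))
              + ennreal (r * max 0 (LBINT t = r..a * \<bar>x0\<bar>.
                    enn2real (tv_up np nn (cball (complex_of_real x0) t)) / t\<^sup>2))" .
    note fin' = fin[unfolded x0_def r_def F_def]
    note J3 = J(3)[unfolded F_def]
    show "let x0 = (t1 + t2) / 2; r = (t2 - t1) / 2;
            F = distR (\<lambda>B. real_of_ereal (tv_setfun (bal np nn) B))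
        in 0 \<le> F t2 - F t1 \<and>
           ennreal (F t2 - F t1)
             \<le> tv_up np nn (cball (complex_of_real x0) r)
              + ennreal (2 * r / (a * \<bar>x0\<bar>)) * tv_up np nn (cball 0 (3 / a * \<bar>x0\<bar>))
              + ennreal (r / (1 - a)\<^sup>2) *
                  ((\<integral>\<^sup>+ z. indicator ({z. cmod z \<ge> \<bar>x0\<bar>} \<inter> upper_closed) z
                          * ennreal \<bar>Im (1 / z)\<bar> \<partial>np)
                 + (\<integral>\<^sup>+ z. indicator ({z. cmod z \<ge> \<bar>x0\<bar>} \<inter> upper_closed) z
                          * ennreal \<bar>Im (1 / z)\<bar> \<partial>nn))
              + ennreal (r * max 0 (LBINT t = r..a * \<bar>x0\<bar>.
                    enn2real (tv_up np nn (cball (complex_of_real x0) t)) / t\<^sup>2))"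
      unfolding Let_def by (rule conjI[OF J3 fin'])
  qed
qed

end
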